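(* Every weakly contig-preserving assembly graph is splitting. Every splitting, non-redundant assembly graph is weakly contig-preserving.
   Context: All strings are over a fixed finite alphabet $\Sigma$. A cyclic string is a bi-infinite periodic word $\mathbb{Z}\to\Sigma$, considered up to shifting indices; for a nonempty finite string $x$, $\langle x\rangle$ is the cyclic string repeating $x$ in both directions. Finite substrings of cyclic strings are contiguous blocks; a cyclic string is a substring only of itself. A string $u$ is a proper infix of $w$ if $w=aub$ with $a,b$ nonempty. An abstract assembly graph is a finite directed multigraph in which each vertex and edge carries a label (a finite or cyclic string) such that for every edge $e$ from $u$ to $v$, $Label(u)$ is a prefix and $Label(v)$ a suffix of $Label(e)$. An edge $e$ from $u$ to $v$ is a prefix edge if $Label(e)=Label(v)$, a suffix edge if $Label(e)=Label(u)$. An assembly graph is an abstract assembly graph in which every vertex and edge lies on a directed cycle and no edge is both a prefix and a suffix edge. The label of a walk $v_0,e_1,\dots,e_n,v_n$ is $Label(e_1)$ followed, for $i\ge 2$, by $Label(e_i)$ with its first $|Label(v_{i-1})|$ characters removed; a walk with no edges has its vertex label. A circuit is a primitive closed walk up to rotation; if its walk label is $Label(v_0)x$, its label is $\langle x\rangle$. $P$ is an inner subwalk of $Q$ if $Q=APB$ with walks $A,B$ each having at least one edge. The graph is non-redundant if whenever $Label(P)$ is a proper infix of $Label(Q)$ for walks $P,Q$, $P$ is an inner subwalk of $Q$. The graph is splitting if for every vertex $v$ and any two distinct edges $e_1,e_2$ leaving $v$, the longest common prefix of $Label(e_1)$ and $Label(e_2)$ is $Label(v)$, and for every vertex $u$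 and any two distinct edges entering $u$, the longest common suffix of their labels is $Label(u)$ (labels diverge immediately after/before the shared vertex label). A genome path candidate is a finite collection of circuits; a genome candidate is a finite collection of cyclic strings, and $Labels$ maps a genome path candidate to the genome candidate of its circuit labels (and sets of walks/candidates elementwise). For a set $\mathfrak{P}$ of genome path candidates, $\mathrm{OGA}(\mathfrak{P})$ is the set of walks that are subwalks (traversals of consecutive vertices and edges, possibly wrapping around) of some circuit of every candidate in $\mathfrak{P}$ and are maximal with this property under the subwalk relation. For a set $\mathfrak{C}$ of genome candidates, $\mathrm{OA}(\mathfrak{C})$ is the set of strings that are substrings of some element of every candidate in $\mathfrak{C}$ and are maximal with this property under the substring relation. An assembly graph is weakly contig-preserving if for every set $\mathfrak{P}$ of genome path candidates, $Labels(\mathrm{OGA}(\mathfrak{P}))\subseteq \mathrm{OA}(Labels(\mathfrak{P}))$. *)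

theory Defs
  imports Main "HOL-Library.Sublist"
begin

text \<open>The bi-infinite periodic word repeating x, as a function int => 'a, together
 with all its shifts (cyclic strings are considered up to shifting indices).\<close>
definition cyc_set :: "'a list \<Rightarrow> (int \<Rightarrow> 'a) set" where
  "cyc_set x = {f. \<exists>k::int. f = (\<lambda>i. x ! nat ((i + k) mod int (length x)))}"

typedef 'a cstr = "{S :: (int \<Rightarrow> 'a) set. \<exists>x. x \<noteq> [] \<and> S = cyc_set x}"
  by (rule exI[of _ "cyc_set [undefined]"]) auto

definition cyc :: "'a list \<Rightarrow> 'a cstr" where
  "cyc x = Abs_cstr (cyc_set x)"

datatype 'a label = Fin "'a list" | Cyc "'a cstr"

fun lprefix :: "'a label \<Rightarrow> 'a label \<Rightarrow> bool" where
  "lprefix (Fin x) (Fin y) = prefix x y"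
| "lprefix (Cyc c) (Cyc d) = (c = d)"
| "lprefix _ _ = False"

fun lsuffix :: "'a label \<Rightarrow> 'a label \<Rightarrow> bool" where
  "lsuffix (Fin x) (Fin y) = suffix x y"
| "lsuffix (Cyc c) (Cyc d) = (c = d)"
| "lsuffix _ _ = False"

fun lsubstr :: "'a label \<Rightarrow> 'a label \<Rightarrow> bool" where
  "lsubstr (Fin x) (Fin y) = sublist x y"
| "lsubstr (Fin x) (Cyc c) =
     (\<exists>f \<in> Rep_cstr c. \<exists>k::int. x = map (\<lambda>i. f (k + int i)) [0..<length x])"
| "lsubstr (Cyc c) (Cyc d) = (c = d)"
| "lsubstr (Cyc c) (Fin y) = False"

fun lproper_infix :: "'a label \<Rightarrow> 'a label \<Rightarrow> bool" where
  "lproper_infix (Fin u) (Fin w) = (\<exists>a b. a \<noteq> [] \<and> b \<noteq> [] \<and> w = a @ u @ b)"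
| "lproper_infix _ _ = False"

text \<open>Auxiliary operations (the cyclic cases never arise in assembly graphs).\<close>
fun llen :: "'a label \<Rightarrow> nat" where
  "llen (Fin x) = length x" | "llen (Cyc c) = 0"

fun lstr :: "'a label \<Rightarrow> 'a list" where
  "lstr (Fin x) = x" | "lstr (Cyc c) = []"

fun lapp :: "'a label \<Rightarrow> 'a list \<Rightarrow> 'a label" where
  "lapp (Fin x) y = Fin (x @ y)" | "lapp (Cyc c) y = Cyc c"

fun llcp :: "'a label \<Rightarrow> 'a label \<Rightarrow> 'a label" where
  "llcp (Fin x) (Fin y) = Fin (longest_common_prefix x y)"
| "llcp a b = (if a = b then a else Fin [])"

fun llcs :: "'a label \<Rightarrow> 'a label \<Rightarrow> 'a label" where
  "llcs (Fin x) (Fin y) = Fin (rev (longest_common_prefix (rev x) (rev y)))"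
| "llcs a b = (if a = b then a else Fin [])"

record ('v, 'e, 'a) agraph =
  verts :: "'v set"
  arcs  :: "'e set"
  tail  :: "'e \<Rightarrow> 'v"
  head  :: "'e \<Rightarrow> 'v"
  vlab  :: "'v \<Rightarrow> 'a label"
  elab  :: "'e \<Rightarrow> 'a label"

definition abstract_assembly_graph :: "('v, 'e, 'a) agraph \<Rightarrow> bool" where
  "abstract_assembly_graph G \<longleftrightarrow> finite (verts G) \<and> finite (arcs G) \<and>
     (\<forall>e \<in> arcs G. tail G e \<in> verts G \<and> head G e \<in> verts G \<and>
        lprefix (vlab G (tail G e)) (elab G e) \<and> lsuffix (vlab G (head G e)) (elab G e))"

fun is_walk :: "('v, 'e, 'a) agraph \<Rightarrow> 'v \<Rightarrow> 'e list \<Rightarrow> bool" where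
  "is_walk G v [] = (v \<in> verts G)"
| "is_walk G v (e # es) =
     (v \<in> verts G \<and> e \<in> arcs G \<and> tail G e = v \<and> is_walk G (head G e) es)"

definition walk_end :: "('v, 'e, 'a) agraph \<Rightarrow> 'v \<Rightarrow> 'e list \<Rightarrow> 'v" where
  "walk_end G v es = (if es = [] then v else head G (last es))"

definition walk_verts :: "('v, 'e, 'a) agraph \<Rightarrow> 'v \<Rightarrow> 'e list \<Rightarrow> 'v list" where
  "walk_verts G v es = v # map (head G) es"

definition is_dcycle :: "('v, 'e, 'a) agraph \<Rightarrow> 'v \<Rightarrow> 'e list \<Rightarrow> bool" where
  "is_dcycle G v es \<longleftrightarrow> es \<noteq> [] \<and> is_walk G v es \<and> walk_end G v es = v \<and>
     distinct (map (tail G) es)"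

definition prefix_edge :: "('v, 'e, 'a) agraph \<Rightarrow> 'e \<Rightarrow> bool" where
  "prefix_edge G e \<longleftrightarrow> elab G e = vlab G (head G e)"

definition suffix_edge :: "('v, 'e, 'a) agraph \<Rightarrow> 'e \<Rightarrow> bool" where
  "suffix_edge G e \<longleftrightarrow> elab G e = vlab G (tail G e)"

definition assembly_graph :: "('v, 'e, 'a) agraph \<Rightarrow> bool" where
  "assembly_graph G \<longleftrightarrow> abstract_assembly_graph G \<and>
     (\<forall>x \<in> verts G. \<exists>v es. is_dcycle G v es \<and> x \<in> set (walk_verts G v es)) \<and>
     (\<forall>e \<in> arcs G. \<exists>v es. is_dcycle G v es \<and> e \<in> set es) \<and>
     (\<forall>e \<in> arcs G. \<not> (prefix_edge G e \<and> suffix_edge G e))"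

fun wlab_aux :: "('v, 'e, 'a) agraph \<Rightarrow> 'a label \<Rightarrow> 'v \<Rightarrow> 'e list \<Rightarrow> 'a label" where
  "wlab_aux G acc v [] = acc"
| "wlab_aux G acc v (e # es) =
     wlab_aux G (lapp acc (drop (llen (vlab G v)) (lstr (elab G e)))) (head G e) es"

text \<open>Label(e1), followed for i >= 2 by Label(e_i) with its first |Label(v_(i-1))| characters removed.\<close>
definition walk_label :: "('v, 'e, 'a) agraph \<Rightarrow> 'v \<Rightarrow> 'e list \<Rightarrow> 'a label" where
  "walk_label G v es = (case es of [] \<Rightarrow> vlab G v | e # es' \<Rightarrow> wlab_aux G (elab G e) (head G e) es')"

text \<open>A circuit is a primitive closed walk up to rotation; it is represented by the edge
 list of any of its rotations (all notions below are rotation invariant).\<close>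
definition is_circuit :: "('v, 'e, 'a) agraph \<Rightarrow> 'e list \<Rightarrow> bool" where
  "is_circuit G cs \<longleftrightarrow> cs \<noteq> [] \<and> is_walk G (tail G (hd cs)) cs \<and>
     head G (last cs) = tail G (hd cs) \<and>
     \<not> (\<exists>ys k. k \<ge> 2 \<and> cs = concat (replicate k ys))"

definition circ_label :: "('v, 'e, 'a) agraph \<Rightarrow> 'e list \<Rightarrow> 'a cstr" where
  "circ_label G cs =
     cyc (drop (llen (vlab G (tail G (hd cs)))) (lstr (walk_label G (tail G (hd cs)) cs)))"

definition inner_subwalk :: "('v, 'e, 'a) agraph \<Rightarrow> 'v \<Rightarrow> 'e list \<Rightarrow> 'v \<Rightarrow> 'e list \<Rightarrow> bool" where
  "inner_subwalk G v es v' es' \<longleftrightarrow>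
     (\<exists>as bs. as \<noteq> [] \<and> bs \<noteq> [] \<and> es' = as @ es @ bs \<and> v = walk_end G v' as)"

definition non_redundant :: "('v, 'e, 'a) agraph \<Rightarrow> bool" where
  "non_redundant G \<longleftrightarrow> (\<forall>v es v' es'. is_walk G v es \<and> is_walk G v' es' \<and>
     lproper_infix (walk_label G v es) (walk_label G v' es') \<longrightarrow> inner_subwalk G v es v' es')"

definition splitting :: "('v, 'e, 'a) agraph \<Rightarrow> bool" where
  "splitting G \<longleftrightarrow>
     (\<forall>v \<in> verts G. \<forall>e1 \<in> arcs G. \<forall>e2 \<in> arcs G.
        e1 \<noteq> e2 \<and> tail G e1 = v \<and> tail G e2 = v \<longrightarrow> llcp (elab G e1) (elab G e2) = vlab G v) \<and>
     (\<forall>u \<in> verts G. \<forall>e1 \<in> arcs G. \<forall>e2 \<in> arcs G.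
        e1 \<noteq> e2 \<and> head G e1 = u \<and> head G e2 = u \<longrightarrow> llcs (elab G e1) (elab G e2) = vlab G u)"

datatype ('v, 'e) wobj = Walk 'v "'e list" | Circ "'e list"

fun valid_wobj :: "('v, 'e, 'a) agraph \<Rightarrow> ('v, 'e) wobj \<Rightarrow> bool" where
  "valid_wobj G (Walk v es) = is_walk G v es"
| "valid_wobj G (Circ cs) = is_circuit G cs"

definition sub_ww :: "('v, 'e, 'a) agraph \<Rightarrow> 'v \<Rightarrow> 'e list \<Rightarrow> 'v \<Rightarrow> 'e list \<Rightarrow> bool" where
  "sub_ww G v es v' es' \<longleftrightarrow> (\<exists>as bs. es' = as @ es @ bs \<and> v = walk_end G v' as)"

text \<open>Subwalk relation; subwalks of circuits may wrap around (arbitrarily often).\<close>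
fun subwalk :: "('v, 'e, 'a) agraph \<Rightarrow> ('v, 'e) wobj \<Rightarrow> ('v, 'e) wobj \<Rightarrow> bool" where
  "subwalk G (Walk v es) (Walk v' es') = sub_ww G v es v' es'"
| "subwalk G (Walk v es) (Circ cs) =
     (\<exists>n. sub_ww G v es (tail G (hd cs)) (concat (replicate n cs)))"
| "subwalk G (Circ cs') (Circ cs) = (\<exists>n. cs' = rotate n cs)"
| "subwalk G (Circ cs') (Walk v es) = False"

fun obj_label :: "('v, 'e, 'a) agraph \<Rightarrow> ('v, 'e) wobj \<Rightarrow> 'a label" where
  "obj_label G (Walk v es) = walk_label G v es"
| "obj_label G (Circ cs) = Cyc (circ_label G cs)"

definition genome_path_candidate :: "('v, 'e, 'a) agraph \<Rightarrow> 'e list set \<Rightarrow> bool" where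
  "genome_path_candidate G P \<longleftrightarrow> finite P \<and> (\<forall>c \<in> P. is_circuit G c)"

definition Labels_gpc :: "('v, 'e, 'a) agraph \<Rightarrow> 'e list set \<Rightarrow> 'a cstr set" where
  "Labels_gpc G P = circ_label G ` P"

definition OGA :: "('v, 'e, 'a) agraph \<Rightarrow> 'e list set set \<Rightarrow> ('v, 'e) wobj set" where
  "OGA G PP = {w. valid_wobj G w \<and> (\<forall>P \<in> PP. \<exists>c \<in> P. subwalk G w (Circ c)) \<and>
     (\<forall>w'. valid_wobj G w' \<and> (\<forall>P \<in> PP. \<exists>c \<in> P. subwalk G w' (Circ c)) \<and> subwalk G w w'
            \<longrightarrow> subwalk G w' w)}"

definition OA :: "'a cstr set set \<Rightarrow> 'a label set" where
  "OA CC = {s. (\<forall>C \<in> CC. \<exists>c \<in> C. lsubstr s (Cyc c)) \<and>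
     (\<forall>t. (\<forall>C \<in> CC. \<exists>c \<in> C. lsubstr t (Cyc c)) \<and> lsubstr s t \<longrightarrow> lsubstr t s)}"

definition weakly_contig_preserving :: "('v, 'e, 'a) agraph \<Rightarrow> bool" where
  "weakly_contig_preserving G \<longleftrightarrow>
     (\<forall>PP. (\<forall>P \<in> PP. genome_path_candidate G P) \<longrightarrow>
        obj_label G ` OGA G PP \<subseteq> OA (Labels_gpc G ` PP))"

end

theory Submission imports Defs begin

definition Lv :: "('v, 'e, 'a) agraph \<Rightarrow> 'v \<Rightarrow> 'a list" where
  "Lv G v = lstr (vlab G v)"
definition Le :: "('v, 'e, 'a) agraph \<Rightarrow> 'e \<Rightarrow> 'a list" where
  "Le G e = lstr (elab G e)"
definition qe :: "('v, 'e, 'a) agraph \<Rightarrow> 'e \<Rightarrow> 'a list" where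
  "qe G e = drop (length (Lv G (tail G e))) (Le G e)"
definition pe :: "('v, 'e, 'a) agraph \<Rightarrow> 'e \<Rightarrow> 'a list" where
  "pe G e = take (length (Le G e) - length (Lv G (head G e))) (Le G e)"
definition wl :: "('v, 'e, 'a) agraph \<Rightarrow> 'v \<Rightarrow> 'e list \<Rightarrow> 'a list" where
  "wl G v es = Lv G v @ concat (map (qe G) es)"
definition finl :: "('v, 'e, 'a) agraph \<Rightarrow> bool" where
  "finl G \<longleftrightarrow> (\<forall>v\<in>verts G. vlab G v = Fin (Lv G v)) \<and> (\<forall>e\<in>arcs G. elab G e = Fin (Le G e))"

lemma walk_v: "is_walk G v es \<Longrightarrow> v \<in> verts G"
  by (cases es) auto


lemma is_walk_app: "is_walk G v (xs @ ys) \<longleftrightarrow> is_walk G v xs \<and> is_walk G (walk_end G v xs) ys"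
  by (induction xs arbitrary: v) (auto simp: walk_end_def walk_v)


lemma walk_end_app: "walk_end G v (xs @ ys) = walk_end G (walk_end G v xs) ys"
  by (auto simp: walk_end_def)


lemma walk_end_cons: "walk_end G v (e # es) = walk_end G (head G e) es"
  by (auto simp: walk_end_def)


lemma walk_end_verts: "is_walk G v es \<Longrightarrow> walk_end G v es \<in> verts G"
  by (induction es arbitrary: v) (auto simp: walk_end_cons walk_end_def)



locale fg =
  fixes G :: "('v, 'e, 'a) agraph"
  assumes aag: "abstract_assembly_graph G" and fin: "finl G"
begin

lemma vfin: "v \<in> verts G \<Longrightarrow> vlab G v = Fin (Lv G v)" using fin by (simp add: finl_def)
lemma efin: "e \<in> arcs G \<Longrightarrow> elab G e = Fin (Le G e)" using fin by (simp add: finl_def)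

lemma arc_all: "e \<in> arcs G \<Longrightarrow> tail G e \<in> verts G \<and> head G e \<in> verts G \<and>
        lprefix (vlab G (tail G e)) (elab G e) \<and> lsuffix (vlab G (head G e)) (elab G e)"
  using aag by (simp add: abstract_assembly_graph_def)

lemma arc_ends: "e \<in> arcs G \<Longrightarrow> tail G e \<in> verts G \<and> head G e \<in> verts G"
  using arc_all by simp

lemma arc_q: "e \<in> arcs G \<Longrightarrow> Le G e = Lv G (tail G e) @ qe G e"
proof -
  assume e: "e \<in> arcs G"
  then have "lprefix (vlab G (tail G e)) (elab G e)" using arc_all by simp
  then have "prefix (Lv G (tail G e)) (Le G e)" using e vfin efin arc_ends by fastforce
  then show ?thesis unfolding qe_def by (metis append_take_drop_id prefix_def append_eq_conv_conj)
qed

lemma arc_p: "e \<in> arcs G \<Longrightarrow> Le G e = pe G e @ Lv G (head G e)"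
proof -
  assume e: "e \<in> arcs G"
  then have "lsuffix (vlab G (head G e)) (elab G e)" using arc_all by simp
  then have "suffix (Lv G (head G e)) (Le G e)" using e vfin efin arc_ends by fastforce
  then show ?thesis unfolding pe_def suffix_def by auto
qed

lemma suffix_edge_iff: "e \<in> arcs G \<Longrightarrow> suffix_edge G e \<longleftrightarrow> qe G e = []"
  unfolding suffix_edge_def using efin vfin arc_ends arc_q
  by (metis append.right_neutral append_self_conv label.inject)

lemma prefix_edge_iff: "e \<in> arcs G \<Longrightarrow> prefix_edge G e \<longleftrightarrow> pe G e = []"
  unfolding prefix_edge_def using efin vfin arc_ends arc_p
  by (metis append_Nil append_same_eq label.inject)

lemma wlab_aux_fin: "is_walk G u es \<Longrightarrow> wlab_aux G (Fin acc) u es = Fin (acc @ concat (map (qe G) es))"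
proof (induction es arbitrary: u acc)
  case Nil then show ?case by simp
next
  case (Cons f es)
  then have f: "f \<in> arcs G" "tail G f = u" "is_walk G (head G f) es" by auto
  have "llen (vlab G u) = length (Lv G u)" using f arc_ends vfin by (metis llen.simps(1))
  moreover have "lstr (elab G f) = Le G f" by (simp add: Le_def)
  ultimately have "drop (llen (vlab G u)) (lstr (elab G f)) = qe G f" using f by (simp add: qe_def)
  then show ?case using Cons.IH[OF f(3)] by simp
qed

lemma walk_label_wl: "is_walk G v es \<Longrightarrow> walk_label G v es = Fin (wl G v es)"
proof (cases es)
  case Nil
  assume "is_walk G v es" then show ?thesis using Nil vfin by (simp add: walk_label_def wl_def)
next
  case (Cons e es')
  assume w: "is_walk G v es"
  then have e: "e \<in> arcs G" "tail G e = v" "is_walk G (head G e) es'" using Cons by auto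
  show ?thesis using Cons wlab_aux_fin[OF e(3)] efin[OF e(1)] arc_q[OF e(1)] e(2)
    by (simp add: walk_label_def wl_def)
qed

lemma wl_app: "wl G v (xs @ ys) = wl G v xs @ concat (map (qe G) ys)"
  by (simp add: wl_def)

lemma wl_pe: "is_walk G v es \<Longrightarrow> wl G v es = concat (map (pe G) es) @ Lv G (walk_end G v es)"
proof (induction es arbitrary: v)
  case Nil then show ?case by (simp add: wl_def walk_end_def)
next
  case (Cons e es)
  then have e: "e \<in> arcs G" "tail G e = v" "is_walk G (head G e) es" by auto
  have "wl G v (e # es) = Le G e @ concat (map (qe G) es)" using arc_q[OF e(1)] e(2) by (simp add: wl_def)
  also have "\<dots> = pe G e @ wl G (head G e) es" using arc_p[OF e(1)] by (simp add: wl_def)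
  finally show ?case using Cons.IH[OF e(3)] by (simp add: walk_end_cons)
qed

lemma wl_split: "is_walk G v (xs @ ys) \<Longrightarrow> wl G v (xs @ ys) = concat (map (pe G) xs) @ wl G (walk_end G v xs) ys"
proof -
  assume w: "is_walk G v (xs @ ys)"
  then have "is_walk G v xs" by (simp add: is_walk_app)
  then have "wl G v xs = concat (map (pe G) xs) @ Lv G (walk_end G v xs)" by (rule wl_pe)
  then show ?thesis by (simp add: wl_app wl_def)
qed

lemma wl_prefix_Lv: "prefix (Lv G v) (wl G v es)" by (simp add: wl_def)

end

lemma tails_heads: "is_walk G u es \<Longrightarrow> map (tail G) es @ [walk_end G u es] = u # map (head G) es"
  by (induction es arbitrary: u) (auto simp: walk_end_cons walk_end_def)

definition cw :: "('v, 'e, 'a) agraph \<Rightarrow> 'e list \<Rightarrow> bool" where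
  "cw G c \<longleftrightarrow> c \<noteq> [] \<and> is_walk G (tail G (hd c)) c \<and> walk_end G (tail G (hd c)) c = tail G (hd c)"

abbreviation rep :: "nat \<Rightarrow> 'b list \<Rightarrow> 'b list" where
  "rep N c \<equiv> concat (replicate N c)"

definition occ :: "'a list \<Rightarrow> 'a list \<Rightarrow> nat \<Rightarrow> bool" where
  "occ t x k \<longleftrightarrow> (\<forall>i<length t. t ! i = x ! ((k + i) mod length x))"

lemma nth_rep: "i < N * length x \<Longrightarrow> rep N x ! i = x ! (i mod length x)"
proof (induction N arbitrary: i)
  case 0 then show ?case by simp
next
  case (Suc N)
  show ?case
  proof (cases "i < length x")
    case True then show ?thesis by (simp add: nth_append)
  next
    case False
    then have "i - length x < N * length x" using Suc.prems by simp
    then have "rep N x ! (i - length x) = x ! ((i - length x) mod length x)" by (rule Suc.IH)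
    moreover have "(i - length x) mod length x = i mod length x" using False
      by (simp add: le_mod_geq)
    ultimately show ?thesis using False by (simp add: nth_append)
  qed
qed

lemma length_rep[simp]: "length (rep N x) = N * length x"
  by (induction N) auto

lemma Rep_cyc: "x \<noteq> [] \<Longrightarrow> Rep_cstr (cyc x) = cyc_set x"
  unfolding cyc_def by (rule Abs_cstr_inverse) auto

lemma nat_mod_shift:
  fixes k :: int and n :: nat and i :: nat
  assumes "n > 0"
  shows "nat ((k + int i) mod int n) = (nat (k mod int n) + i) mod n"
proof -
  have "(k + int i) mod int n = (k mod int n + int i) mod int n" by (simp add: mod_add_left_eq)
  also have "k mod int n = int (nat (k mod int n))" using assms by simp
  finally have "(k + int i) mod int n = int ((nat (k mod int n) + i) mod n)"
    by (metis of_nat_add of_nat_mod)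
  then show ?thesis by simp
qed

lemma lsubstr_cyc:
  assumes x: "x \<noteq> []"
  shows "lsubstr (Fin t) (Cyc (cyc x)) \<longleftrightarrow> (\<exists>k. occ t x k)"
proof
  assume "lsubstr (Fin t) (Cyc (cyc x))"
  then obtain f k where f: "f \<in> cyc_set x" and t: "t = map (\<lambda>i. f (k + int i)) [0..<length t]"
    using Rep_cyc[OF x] by auto
  from f obtain k' where f': "f = (\<lambda>i. x ! nat ((i + k') mod int (length x)))"
    unfolding cyc_set_def by auto
  have n: "length x > 0" using x by simp
  have "occ t x (nat ((k + k') mod int (length x)))"
    unfolding occ_def
  proof (intro allI impI)
    fix i assume i: "i < length t"
    have "t ! i = f (k + int i)" using i by (subst t) simp
    also have "\<dots> = x ! nat ((k + k' + int i) mod int (length x))" using f' by (simp add: ac_simps)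
    also have "\<dots> = x ! ((nat ((k + k') mod int (length x)) + i) mod length x)"
      using nat_mod_shift[OF n] by simp
    finally show "t ! i = x ! ((nat ((k + k') mod int (length x)) + i) mod length x)" .
  qed
  then show "\<exists>k. occ t x k" by blast
next
  assume "\<exists>k. occ t x k"
  then obtain k where k: "occ t x k" by blast
  define f where "f = (\<lambda>i::int. x ! nat ((i + 0) mod int (length x)))"
  have f: "f \<in> cyc_set x" unfolding cyc_set_def f_def by blast
  have "t = map (\<lambda>i. f (int k + int i)) [0..<length t]"
  proof (rule nth_equalityI)
    show "length t = length (map (\<lambda>i. f (int k + int i)) [0..<length t])" by simp
  next
    fix i assume i: "i < length t"
    have "(int k + int i) mod int (length x) = int ((k + i) mod length x)"
      by (metis of_nat_add of_nat_mod)
    then show "t ! i = map (\<lambda>i. f (int k + int i)) [0..<length t] ! i"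
      using k i unfolding occ_def f_def by simp
  qed
  then show "lsubstr (Fin t) (Cyc (cyc x))" using f Rep_cyc[OF x] by auto
qed

lemma occ_sub: "occ t x k \<Longrightarrow> t = a @ t' @ b \<Longrightarrow> occ t' x (k + length a)"
  unfolding occ_def
proof (intro allI impI)
  fix i assume o: "\<forall>i<length t. t ! i = x ! ((k + i) mod length x)" and t: "t = a @ t' @ b" and i: "i < length t'"
  have "t ! (length a + i) = t' ! i" using t i by (simp add: nth_append)
  moreover have "length a + i < length t" using t i by simp
  ultimately show "t' ! i = x ! ((k + length a + i) mod length x)" using o by (metis add.assoc)
qed

context fg begin

lemma cw_rep: "cw G c \<Longrightarrow> is_walk G (tail G (hd c)) (rep N c) \<and> walk_end G (tail G (hd c)) (rep N c) = tail G (hd c)"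
proof (induction N)
  case 0 then show ?case unfolding cw_def using walk_v by (auto simp: walk_end_def)
next
  case (Suc N) then show ?case unfolding cw_def by (auto simp: is_walk_app walk_end_app)
qed

lemma concat_map_rep: "concat (map f (rep N c)) = rep N (concat (map f c))"
  by (induction N) auto

lemma wl_rep: "wl G u (rep N c) = Lv G u @ rep N (concat (map (qe G) c))"
  by (simp add: wl_def concat_map_rep)

lemma wl_rep_pe: "cw G c \<Longrightarrow> wl G (tail G (hd c)) (rep N c) = rep N (concat (map (pe G) c)) @ Lv G (tail G (hd c))"
proof -
  assume c: "cw G c"
  then have "is_walk G (tail G (hd c)) (rep N c)" "walk_end G (tail G (hd c)) (rep N c) = tail G (hd c)"
    using cw_rep by auto
  then show ?thesis using wl_pe concat_map_rep by simp
qed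

lemma len_pe_qe: "cw G c \<Longrightarrow> length (concat (map (pe G) c)) = length (concat (map (qe G) c))"
proof -
  assume c: "cw G c"
  have "concat (map (pe G) c) @ Lv G (tail G (hd c)) = Lv G (tail G (hd c)) @ concat (map (qe G) c)"
    using wl_rep_pe[OF c, of 1] wl_rep[of "tail G (hd c)" 1 c] by simp
  then have "length (concat (map (pe G) c) @ Lv G (tail G (hd c))) = length (Lv G (tail G (hd c)) @ concat (map (qe G) c))"
    by simp
  then show ?thesis by simp
qed

lemma circ_label_X: "cw G c \<Longrightarrow> circ_label G c = cyc (concat (map (qe G) c))"
proof -
  assume c: "cw G c"
  then have w: "is_walk G (tail G (hd c)) c" unfolding cw_def by simp
  then have "tail G (hd c) \<in> verts G" by (rule walk_v)
  then show ?thesis using walk_label_wl[OF w] vfin unfolding circ_label_def by (simp add: wl_def)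
qed

lemma lemA:
  assumes c: "cw G c" and X: "concat (map (qe G) c) \<noteq> []"
    and sp: "rep N c = as @ es @ bs" and v: "v = walk_end G (tail G (hd c)) as"
  shows "\<exists>k. occ (wl G v es) (concat (map (qe G) c)) k"
proof -
  define u where "u = tail G (hd c)"
  define X where "X = concat (map (qe G) c)"
  define P where "P = concat (map (pe G) c)"
  define l where "l = length (Lv G u)"
  define n where "n = length X"
  have n: "n > 0" using X unfolding n_def X_def by simp
  have Pn: "length P = n" using len_pe_qe[OF c] unfolding P_def n_def X_def .
  define R where "R = rep (l + 1) c"
  have full: "rep (l + 1 + N) c = R @ as @ es @ bs" unfolding R_def using sp
    by (simp add: replicate_add)
  have wR: "is_walk G u R" "walk_end G u R = u" using cw_rep[OF c, of "l + 1"] unfolding R_def u_def by blast+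
  have wf: "is_walk G u (R @ as @ es @ bs)"
  proof -
    have "is_walk G u (rep (l + 1 + N) c)" using cw_rep[OF c] u_def by blast
    then show ?thesis by (simp only: full)
  qed
  have ve: "walk_end G u (R @ as) = v" using wR v unfolding u_def by (simp add: walk_end_app)
  have "wl G u (R @ as @ es @ bs) = concat (map (pe G) (R @ as)) @ wl G v (es @ bs)"
    using wl_split[of u "R @ as" "es @ bs"] wf ve by simp
  also have "\<dots> = concat (map (pe G) (R @ as)) @ wl G v es @ concat (map (qe G) bs)"
    by (simp add: wl_app)
  finally have eq1: "wl G u (R @ as @ es @ bs) = concat (map (pe G) (R @ as)) @ wl G v es @ concat (map (qe G) bs)" .
  have eq2: "wl G u (R @ as @ es @ bs) = Lv G u @ rep (l + 1 + N) X"
    using wl_rep[of u "l + 1 + N" c] full unfolding X_def by simp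
  define p where "p = length (concat (map (pe G) (R @ as)))"
  have pR: "length (concat (map (pe G) R)) = (l + 1) * n" unfolding R_def using concat_map_rep Pn P_def
    by (metis length_rep)
  have pl: "p \<ge> (l + 1) * n" unfolding p_def using pR by simp
  have h1: "l + 1 \<le> (l + 1) * n" using mult_le_mono2[of 1 n "l + 1"] n by simp
  have "l + 1 \<le> p" by (rule order_trans[OF h1 pl])
  then have "l < p" by simp
  have "occ (wl G v es) X (p - l)"
    unfolding occ_def
  proof (intro allI impI)
    fix i assume i: "i < length (wl G v es)"
    define W where "W = wl G u (R @ as @ es @ bs)"
    have "W ! (p + i) = wl G v es ! i" unfolding W_def eq1 p_def using i by (simp add: nth_append)
    moreover have lenW: "length W = l + (l + 1 + N) * n" unfolding W_def eq2 l_def n_def by simp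
    moreover have "p + i < length W" unfolding W_def eq1 p_def using i by simp
    ultimately have "wl G v es ! i = (Lv G u @ rep (l + 1 + N) X) ! (p + i)" unfolding W_def eq2 by simp
    also have "\<dots> = rep (l + 1 + N) X ! (p + i - l)" using \<open>l < p\<close> unfolding l_def by (simp add: nth_append)
    also have "\<dots> = X ! ((p + i - l) mod n)"
      using nth_rep[of "p + i - l" "l + 1 + N" X] \<open>p + i < length W\<close> lenW \<open>l < p\<close> unfolding n_def by simp
    finally show "wl G v es ! i = X ! ((p - l + i) mod length X)" using \<open>l < p\<close> unfolding n_def by simp
  qed
  then show ?thesis unfolding X_def by blast
qed

lemma lemB:
  assumes c: "cw G c" and X: "concat (map (qe G) c) \<noteq> []"
    and o: "occ t (concat (map (qe G) c)) k"
  shows "\<exists>N \<alpha> \<beta>. wl G (tail G (hd c)) (rep N c) = \<alpha> @ t @ \<beta> \<and> \<alpha> \<noteq> [] \<and> \<beta> \<noteq> []"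
proof -
  define u where "u = tail G (hd c)"
  define X where "X = concat (map (qe G) c)"
  define l where "l = length (Lv G u)"
  define n where "n = length X"
  have n: "n > 0" using X unfolding n_def X_def by simp
  define N where "N = length t + 3"
  define W where "W = wl G u (rep N c)"
  have W: "W = Lv G u @ rep N X" unfolding W_def X_def by (rule wl_rep)
  define p where "p = l + n + k mod n"
  have lenW: "length W = l + N * n" unfolding W l_def n_def by simp
  have "N * n = length t * n + 3 * n" unfolding N_def by (simp add: algebra_simps)
  moreover have "length t * n \<ge> length t" using n by simp
  moreover have "k mod n < n" using n by simp
  ultimately have big: "p + length t < length W" unfolding p_def lenW by linarith
  have mid: "take (length t) (drop p W) = t"
  proof (rule nth_equalityI)
    show "length (take (length t) (drop p W)) = length t" using big by simp
  next
    fix i assume "i < length (take (length t) (drop p W))"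
    then have i: "i < length t" by simp
    have "take (length t) (drop p W) ! i = W ! (p + i)" using i big by simp
    also have "\<dots> = rep N X ! (n + k mod n + i)" unfolding W p_def l_def
      by (simp add: nth_append add.assoc)
    also have "\<dots> = X ! ((n + k mod n + i) mod n)"
    proof -
      have "n + k mod n + i < N * n" using big lenW i unfolding p_def by linarith
      then show ?thesis using nth_rep[of "n + k mod n + i" N X] unfolding n_def by blast
    qed
    also have "(n + k mod n + i) mod n = (k + i) mod n"
    proof -
      have "(n + k mod n + i) mod n = (k mod n + i) mod n" by (simp add: add.assoc)
      also have "\<dots> = (k + i) mod n" by (simp add: mod_add_left_eq)
      finally show ?thesis .
    qed
    also have "X ! ((k + i) mod n) = t ! i" using o i unfolding occ_def X_def n_def by simp
    finally show "take (length t) (drop p W) ! i = t ! i" .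
  qed
  have d: "drop (length t) (drop p W) = drop (p + length t) W"
    by (simp only: drop_drop add.commute[of "length t" p])
  have "W = take p W @ take (length t) (drop p W) @ drop (length t) (drop p W)" by (simp only: append_take_drop_id)
  then have e1: "W = take p W @ t @ drop (p + length t) W" by (simp only: mid d)
  have "p > 0" using n unfolding p_def by simp
  have lW: "length W > p + length t" using big by simp
  have "W \<noteq> []" using lW by (cases W) auto
  then have e2: "take p W \<noteq> []" using \<open>p > 0\<close> by simp
  have e3: "drop (p + length t) W \<noteq> []" using lW by simp
  show ?thesis
    apply (rule exI[of _ N], rule exI[of _ "take p W"], rule exI[of _ "drop (p + length t) W"])
    using e1 e2 e3 unfolding W_def u_def by simp
qed

end

lemma out_in_edge:
  assumes "assembly_graph G" "x \<in> verts G"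
  shows "(\<exists>e\<in>arcs G. tail G e = x) \<and> (\<exists>e\<in>arcs G. head G e = x)"
proof -
  have "\<forall>x\<in>verts G. \<exists>v es. is_dcycle G v es \<and> x \<in> set (walk_verts G v es)"
    using assms(1) by (simp add: assembly_graph_def)
  then obtain v es where d: "is_dcycle G v es" and x: "x \<in> set (walk_verts G v es)"
    using assms(2) by blast
  then have w: "is_walk G v es" "es \<noteq> []" "walk_end G v es = v" unfolding is_dcycle_def by auto
  have th: "map (tail G) es @ [v] = v # map (head G) es" using tails_heads[OF w(1)] w(3) by simp
  have ar: "set es \<subseteq> arcs G" using w(1) by (induction es arbitrary: v) auto
  have "x \<in> set (map (tail G) es @ [v])" using x th unfolding walk_verts_def by simp
  moreover have "tail G (hd es) = v" using w by (cases es) auto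
  ultimately have "x \<in> tail G ` set es" using w(2) by (cases es) auto
  moreover have "x \<in> head G ` set es"
  proof -
    have "x \<in> set (v # map (head G) es)" using x unfolding walk_verts_def by simp
    moreover have "v = head G (last es)" using w unfolding walk_end_def by simp
    ultimately show ?thesis using w(2) by auto
  qed
  ultimately obtain e1 e2 where "e1 \<in> set es" "x = tail G e1" "e2 \<in> set es" "x = head G e2" by blast
  then have "e1 \<in> arcs G" "e2 \<in> arcs G" "tail G e1 = x" "head G e2 = x" using ar by auto
  then show ?thesis by auto
qed

lemma assembly_finl:
  assumes ag: "assembly_graph G"
  shows "finl G"
proof -
  have aag: "abstract_assembly_graph G" using ag unfolding assembly_graph_def by simp
  have E: "elab G e = Fin (Le G e)" if e: "e \<in> arcs G" for e
  proof (cases "elab G e")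
    case (Fin x) then show ?thesis by (simp add: Le_def)
  next
    case (Cyc c)
    have "lprefix (vlab G (tail G e)) (elab G e)" "lsuffix (vlab G (head G e)) (elab G e)"
      using aag e unfolding abstract_assembly_graph_def by auto
    moreover have "lprefix a (Cyc c) \<Longrightarrow> a = Cyc c" for a by (cases a) auto
    moreover have "lsuffix a (Cyc c) \<Longrightarrow> a = Cyc c" for a by (cases a) auto
    ultimately have "vlab G (tail G e) = Cyc c" "vlab G (head G e) = Cyc c" using Cyc by auto
    then have "prefix_edge G e \<and> suffix_edge G e" using Cyc unfolding prefix_edge_def suffix_edge_def by simp
    moreover have "\<forall>e\<in>arcs G. \<not> (prefix_edge G e \<and> suffix_edge G e)" using ag by (simp add: assembly_graph_def)
    ultimately show ?thesis using e by blast
  qed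
  have V: "vlab G v = Fin (Lv G v)" if v: "v \<in> verts G" for v
  proof -
    obtain e where e: "e \<in> arcs G" "tail G e = v" using out_in_edge[OF ag v] by blast
    have "lprefix (vlab G v) (elab G e)" using aag e unfolding abstract_assembly_graph_def by auto
    then show ?thesis using E[OF e(1)] by (cases "vlab G v") (auto simp: Lv_def)
  qed
  show ?thesis unfolding finl_def using E V by blast
qed

locale ag =
  fixes G :: "('v, 'e, 'a) agraph"
  assumes asm: "assembly_graph G"
begin

lemma ag_aag: "abstract_assembly_graph G" using asm by (simp add: assembly_graph_def)
lemma ag_nb: "\<forall>e\<in>arcs G. \<not> (prefix_edge G e \<and> suffix_edge G e)" using asm by (simp add: assembly_graph_def)

sublocale fg G
  by unfold_locales (rule ag_aag, rule assembly_finl[OF asm])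

lemma not_both: "e \<in> arcs G \<Longrightarrow> pe G e = [] \<Longrightarrow> qe G e = [] \<Longrightarrow> False"
  using ag_nb prefix_edge_iff suffix_edge_iff by blast

lemma X_ne: "cw G c \<Longrightarrow> concat (map (qe G) c) \<noteq> []"
proof
  assume c: "cw G c" and X: "concat (map (qe G) c) = []"
  then have "concat (map (pe G) c) = []" using len_pe_qe by (metis length_0_conv)
  moreover have "hd c \<in> arcs G" using c unfolding cw_def by (cases c) auto
  ultimately show False using X not_both c unfolding cw_def by (cases c) auto
qed

end


lemma lcp_prefix: "prefix xs ys \<Longrightarrow> longest_common_prefix xs ys = xs \<and> longest_common_prefix ys xs = xs"
proof (induction xs arbitrary: ys)
  case Nil then show ?case by (cases ys) auto
next
  case (Cons x xs) then show ?case by (cases ys) auto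
qed

lemma lcp_app: "longest_common_prefix (xs @ ys) (xs @ zs) = xs @ longest_common_prefix ys zs"
  by (induction xs) auto

lemma split_first: "concat (map g xs) \<noteq> [] \<Longrightarrow> \<exists>rs f rest. xs = rs @ f # rest \<and> (\<forall>e\<in>set rs. g e = []) \<and> g f \<noteq> []"
proof (induction xs)
  case Nil then show ?case by simp
next
  case (Cons x xs)
  show ?case
  proof (cases "g x = []")
    case True
    then have "concat (map g xs) \<noteq> []" using Cons.prems by simp
    then obtain rs f rest where "xs = rs @ f # rest" "\<forall>e\<in>set rs. g e = []" "g f \<noteq> []" using Cons.IH by blast
    then show ?thesis using True by (intro exI[of _ "x # rs"] exI[of _ f] exI[of _ rest]) auto
  next
    case False then show ?thesis by (intro exI[of _ "[]"] exI[of _ x] exI[of _ xs]) auto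
  qed
qed

lemma split_last: "concat (map g xs) \<noteq> [] \<Longrightarrow> \<exists>rest f rs. xs = rest @ f # rs \<and> (\<forall>e\<in>set rs. g e = []) \<and> g f \<noteq> []"
proof (induction xs rule: rev_induct)
  case Nil then show ?case by simp
next
  case (snoc x xs)
  show ?case
  proof (cases "g x = []")
    case True
    then have "concat (map g xs) \<noteq> []" using snoc.prems by simp
    then obtain rs f rest where "xs = rest @ f # rs" "\<forall>e\<in>set rs. g e = []" "g f \<noteq> []" using snoc.IH by blast
    then show ?thesis using True by (intro exI[of _ rest] exI[of _ f] exI[of _ "rs @ [x]"]) auto
  next
    case False then show ?thesis by (intro exI[of _ xs] exI[of _ x] exI[of _ "[]"]) auto
  qed
qed

context fg begin

lemma nrD:
  assumes "non_redundant G" "is_walk G v es" "is_walk G v' es'"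
    "lproper_infix (walk_label G v es) (walk_label G v' es')"
  shows "\<exists>as bs. as \<noteq> [] \<and> bs \<noteq> [] \<and> es' = as @ es @ bs \<and> v = walk_end G v' as"
  using assms unfolding non_redundant_def inner_subwalk_def by blast

lemma nrD':
  assumes "non_redundant G" "is_walk G v es" "is_walk G v' es'"
    "wl G v' es' = \<alpha> @ wl G v es @ \<beta>" "\<alpha> \<noteq> []" "\<beta> \<noteq> []"
  shows "\<exists>as bs. as \<noteq> [] \<and> bs \<noteq> [] \<and> es' = as @ es @ bs \<and> v = walk_end G v' as"
proof -
  have "lproper_infix (walk_label G v es) (walk_label G v' es')"
    using assms walk_label_wl by auto
  then show ?thesis using nrD assms(1-3) by blast
qed

lemma align:
  assumes nr: "non_redundant G"
  shows "is_walk G u0 qs \<Longrightarrow> is_walk G v es \<Longrightarrow> wl G u0 qs = \<alpha> @ wl G v es @ \<beta> \<Longrightarrow> \<alpha> \<noteq> [] \<Longrightarrow> \<beta> \<noteq> [] \<Longrightarrow>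
    \<exists>as bs. qs = as @ es @ bs \<and> v = walk_end G u0 as \<and> length (concat (map (pe G) as)) = length \<alpha> \<and> as \<noteq> [] \<and> bs \<noteq> []"
proof (induction qs arbitrary: u0 \<alpha> \<beta> rule: length_induct)
  case (1 qs)
  note wq = "1.prems"(1) and wp = "1.prems"(2) and eq = "1.prems"(3) and an = "1.prems"(4) and bn = "1.prems"(5)
  define s where "s = wl G v es"
  show ?case
  proof (cases "\<exists>f qs'. qs = f # qs' \<and> length (pe G f) < length \<alpha>")
    case True
    then obtain f qs' where q: "qs = f # qs'" and lf: "length (pe G f) < length \<alpha>" by blast
    have wq': "is_walk G (head G f) qs'" using wq q by simp
    have "wl G u0 qs = pe G f @ wl G (head G f) qs'"
      using wl_split[of u0 "[f]" qs'] wq q by (simp add: walk_end_def)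
    then have e: "pe G f @ wl G (head G f) qs' = \<alpha> @ s @ \<beta>" using eq s_def by simp
    define \<alpha>' where "\<alpha>' = drop (length (pe G f)) \<alpha>"
    have a: "\<alpha> = pe G f @ \<alpha>'"
      using e lf unfolding \<alpha>'_def by (metis append_eq_append_conv_if append_take_drop_id less_imp_le_nat)
    have "wl G (head G f) qs' = \<alpha>' @ s @ \<beta>" using e a by simp
    moreover have "\<alpha>' \<noteq> []" using lf unfolding \<alpha>'_def by simp
    moreover have "length qs' < length qs" using q by simp
    ultimately obtain as bs where r: "qs' = as @ es @ bs" "v = walk_end G (head G f) as"
      "length (concat (map (pe G) as)) = length \<alpha>'" "bs \<noteq> []"
      using "1.IH" wq' wp bn s_def by blast
    show ?thesis
      apply (rule exI[of _ "f # as"], rule exI[of _ bs])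
      using r q a wq by (auto simp: walk_end_cons)
  next
    case F1: False
    show ?thesis
    proof (cases "\<exists>f qs'. qs = qs' @ [f] \<and> length (qe G f) < length \<beta>")
      case True
      then obtain f qs' where q: "qs = qs' @ [f]" and lf: "length (qe G f) < length \<beta>" by blast
      have wq': "is_walk G u0 qs'" using wq q by (simp add: is_walk_app)
      have "wl G u0 qs = wl G u0 qs' @ qe G f" using q by (simp add: wl_app)
      then have e: "wl G u0 qs' @ qe G f = \<alpha> @ s @ \<beta>" using eq s_def by simp
      define \<beta>' where "\<beta>' = take (length \<beta> - length (qe G f)) \<beta>"
      have b: "\<beta> = \<beta>' @ qe G f"
      proof -
        have "suffix (qe G f) \<beta>" using e lf
          by (metis suffixI suffix_append suffix_length_le le_less_trans not_less suffix_same_cases)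
        then show ?thesis unfolding \<beta>'_def suffix_def by auto
      qed
      have "wl G u0 qs' = \<alpha> @ s @ \<beta>'" using e b by simp
      moreover have "\<beta>' \<noteq> []" using lf b by auto
      moreover have "length qs' < length qs" using q by simp
      ultimately obtain as bs where r: "qs' = as @ es @ bs" "v = walk_end G u0 as"
        "length (concat (map (pe G) as)) = length \<alpha>" "as \<noteq> []"
        using "1.IH" wq' wp an s_def by blast
      show ?thesis
        apply (rule exI[of _ as], rule exI[of _ "bs @ [f]"])
        using r q by auto
    next
      case F2: False
      obtain as bs where nr1: "as \<noteq> []" "bs \<noteq> []" "qs = as @ es @ bs" "v = walk_end G u0 as"
        using nrD'[OF nr wp wq] eq an bn by blast
      have w1: "is_walk G u0 (as @ es @ bs)" using wq nr1 by simp
      have "wl G u0 qs = concat (map (pe G) as) @ wl G v (es @ bs)"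
        using wl_split[OF w1] nr1 by simp
      then have e: "concat (map (pe G) as) @ s @ concat (map (qe G) bs) = \<alpha> @ s @ \<beta>"
        using eq s_def by (simp add: wl_app)
      obtain a1 as' where a1: "as = a1 # as'" using nr1 by (cases as) auto
      have "length (pe G a1) \<ge> length \<alpha>" using F1 nr1 a1 by auto
      then have ge1: "length (concat (map (pe G) as)) \<ge> length \<alpha>" using a1 by simp
      obtain bs' g where g: "bs = bs' @ [g]" using nr1 by (cases bs rule: rev_cases) auto
      have "length (qe G g) \<ge> length \<beta>" using F2 nr1 g by auto
      then have ge2: "length (concat (map (qe G) bs)) \<ge> length \<beta>" using g by simp
      have "length (concat (map (pe G) as)) + length (concat (map (qe G) bs)) = length \<alpha> + length \<beta>"
        using arg_cong[OF e, of length] by simp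
      then have "length (concat (map (pe G) as)) = length \<alpha>" using ge1 ge2 by linarith
      then show ?thesis using nr1 by blast
    qed
  qed
qed

end

context ag begin

lemma suffix_chain:
  "is_walk G u xs \<Longrightarrow> \<forall>e\<in>set xs. qe G e = [] \<Longrightarrow>
   suffix (Lv G (walk_end G u xs)) (Lv G u) \<and> (xs \<noteq> [] \<longrightarrow> length (Lv G (walk_end G u xs)) < length (Lv G u))"
proof (induction xs arbitrary: u)
  case Nil then show ?case by (simp add: walk_end_def)
next
  case (Cons e xs)
  have e: "e \<in> arcs G" "tail G e = u" "is_walk G (head G e) xs" using Cons.prems by auto
  have q: "qe G e = []" using Cons.prems by simp
  have "Lv G u = pe G e @ Lv G (head G e)" using arc_q[OF e(1)] arc_p[OF e(1)] e q by simp
  moreover have "pe G e \<noteq> []" using not_both e q by blast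
  ultimately have "suffix (Lv G (head G e)) (Lv G u)" "length (Lv G (head G e)) < length (Lv G u)"
    by (auto simp: suffix_def)
  moreover have "suffix (Lv G (walk_end G (head G e) xs)) (Lv G (head G e))"
    "length (Lv G (walk_end G (head G e) xs)) \<le> length (Lv G (head G e))"
    using Cons.IH[OF e(3)] Cons.prems by (auto simp: suffix_length_le)
  ultimately show ?case by (auto simp: walk_end_cons intro: suffix_order.trans)
qed

lemma prefix_chain:
  "is_walk G y xs \<Longrightarrow> \<forall>e\<in>set xs. pe G e = [] \<Longrightarrow>
   prefix (Lv G y) (Lv G (walk_end G y xs)) \<and> (xs \<noteq> [] \<longrightarrow> length (Lv G y) < length (Lv G (walk_end G y xs)))"
proof (induction xs arbitrary: y)
  case Nil then show ?case by (simp add: walk_end_def)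
next
  case (Cons e xs)
  have e: "e \<in> arcs G" "tail G e = y" "is_walk G (head G e) xs" using Cons.prems by auto
  have q: "pe G e = []" using Cons.prems by simp
  have "Lv G (head G e) = Lv G y @ qe G e" using arc_q[OF e(1)] arc_p[OF e(1)] e q by simp
  moreover have "qe G e \<noteq> []" using not_both e q by blast
  ultimately have "prefix (Lv G y) (Lv G (head G e))" "length (Lv G y) < length (Lv G (head G e))"
    by (auto simp: prefix_def)
  moreover have "prefix (Lv G (head G e)) (Lv G (walk_end G (head G e) xs))"
    "length (Lv G (head G e)) \<le> length (Lv G (walk_end G (head G e) xs))"
    using Cons.IH[OF e(3)] Cons.prems by (auto simp: prefix_length_le)
  ultimately show ?case by (auto simp: walk_end_cons intro: prefix_order.trans)
qed

lemma splitD_out: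
  assumes "splitting G" "e1 \<in> arcs G" "e2 \<in> arcs G" "e1 \<noteq> e2" "tail G e1 = v" "tail G e2 = v"
  shows "longest_common_prefix (Le G e1) (Le G e2) = Lv G v"
proof -
  have v: "v \<in> verts G" using assms arc_ends by blast
  have "llcp (elab G e1) (elab G e2) = vlab G v" using assms v unfolding splitting_def by blast
  then show ?thesis using efin[OF assms(2)] efin[OF assms(3)] vfin[OF v] by simp
qed

lemma splitD_in:
  assumes "splitting G" "e1 \<in> arcs G" "e2 \<in> arcs G" "e1 \<noteq> e2" "head G e1 = v" "head G e2 = v"
  shows "rev (longest_common_prefix (rev (Le G e1)) (rev (Le G e2))) = Lv G v"
proof -
  have v: "v \<in> verts G" using assms arc_ends by blast
  have "llcs (elab G e1) (elab G e2) = vlab G v" using assms v unfolding splitting_def by blast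
  then show ?thesis using efin[OF assms(2)] efin[OF assms(3)] vfin[OF v] by simp
qed

lemma right_contra:
  assumes sp: "splitting G" and nr: "non_redundant G"
    and b: "b \<in> arcs G" "tail G b = u" "qe G b = []"
    and w: "is_walk G u (rs @ [f])" and hb: "hd (rs @ [f]) \<noteq> b"
    and rs: "\<forall>e\<in>set rs. qe G e = []" and f: "qe G f \<noteq> []"
  shows False
proof -
  define u1 where "u1 = head G b"
  have Lb: "Le G b = Lv G u" using arc_q[OF b(1)] b by simp
  have Lb2: "Le G b = pe G b @ Lv G u1" using arc_p[OF b(1)] u1_def by simp
  have pb: "pe G b \<noteq> []" using not_both b by blast
  have "wl G u (rs @ [f]) = Lv G u @ qe G f" using rs by (simp add: wl_def)
  then have "wl G u (rs @ [f]) = pe G b @ wl G u1 [] @ qe G f" using Lb Lb2 by (simp add: wl_def)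
  moreover have wu1: "is_walk G u1 []" using arc_ends[OF b(1)] u1_def by simp
  ultimately obtain as bs where nr1: "as \<noteq> []" "bs \<noteq> []" "rs @ [f] = as @ [] @ bs" "u1 = walk_end G u as"
    using nrD'[OF nr wu1 w] pb f by blast
  obtain bs' where bs': "bs = bs' @ [f]" using nr1 by (metis append_butlast_last_id last_appendR last_snoc self_append_conv2)
  have rsa: "rs = as @ bs'" using nr1 bs' by simp
  obtain as0 h where h: "as = as0 @ [h]" using nr1 by (cases as rule: rev_cases) auto
  define y where "y = walk_end G u as0"
  have wa: "is_walk G u as" using w nr1 by (simp add: is_walk_app)
  then have wa0: "is_walk G u as0" and wh: "is_walk G y [h]" using h y_def by (auto simp: is_walk_app)
  have hh: "h \<in> arcs G" "tail G h = y" "head G h = u1" using wh nr1 h y_def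
    by (auto simp: walk_end_app walk_end_def)
  have qh: "qe G h = []" using rs rsa h by simp
  have sa0: "\<forall>e\<in>set as0. qe G e = []" using rs rsa h by simp
  have ch: "suffix (Lv G y) (Lv G u)" "as0 \<noteq> [] \<longrightarrow> length (Lv G y) < length (Lv G u)"
    using suffix_chain[OF wa0 sa0] y_def by auto
  have Lh: "Le G h = Lv G y" using arc_q[OF hh(1)] hh qh by simp
  have "Le G h = pe G h @ Lv G u1" using arc_p[OF hh(1)] hh by simp
  moreover have "pe G h \<noteq> []" using not_both hh qh by blast
  ultimately have lt: "length (Lv G u1) < length (Lv G y)" using Lh by (metis length_append less_add_same_cancel2 length_greater_0_conv)
  have hb2: "h \<noteq> b"
  proof (cases "as0 = []")
    case True
    then have "hd (rs @ [f]) = h" using nr1 h by simp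
    then show ?thesis using hb by simp
  next
    case False
    then have "y \<noteq> u" using ch by auto
    then show ?thesis using hh b by auto
  qed
  have "rev (longest_common_prefix (rev (Le G b)) (rev (Le G h))) = Lv G u1"
    using splitD_in[OF sp b(1) hh(1) hb2[symmetric]] hh u1_def by simp
  moreover have "prefix (rev (Lv G y)) (rev (Lv G u))" using ch(1) by (simp add: suffix_to_prefix)
  ultimately have "Lv G y = Lv G u1" using Lb Lh lcp_prefix by (metis rev_rev_ident)
  then show False using lt by simp
qed

lemma left_contra:
  assumes sp: "splitting G" and nr: "non_redundant G"
    and b: "b \<in> arcs G" "head G b = v" "pe G b = []"
    and w: "is_walk G (tail G f) (f # rs)" and we: "walk_end G (tail G f) (f # rs) = v"
    and hb: "last (f # rs) \<noteq> b"
    and rs: "\<forall>e\<in>set rs. pe G e = []" and f: "pe G f \<noteq> []"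
  shows False
proof -
  define u1 where "u1 = tail G b"
  have Lb: "Le G b = Lv G v" using arc_p[OF b(1)] b by simp
  have Lb2: "Le G b = Lv G u1 @ qe G b" using arc_q[OF b(1)] u1_def by simp
  have qb: "qe G b \<noteq> []" using not_both b by blast
  have "wl G (tail G f) (f # rs) = pe G f @ Lv G v" using rs wl_pe[OF w] we by simp
  then have "wl G (tail G f) (f # rs) = pe G f @ wl G u1 [] @ qe G b" using Lb Lb2 by (simp add: wl_def)
  moreover have wu1: "is_walk G u1 []" using arc_ends[OF b(1)] u1_def by simp
  ultimately obtain as bs where nr1: "as \<noteq> []" "bs \<noteq> []" "f # rs = as @ [] @ bs" "u1 = walk_end G (tail G f) as"
    using nrD'[OF nr wu1 w] qb f by blast
  obtain as' where as': "as = f # as'" using nr1 by (cases as) auto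
  have rsa: "rs = as' @ bs" using nr1 as' by simp
  obtain h bs0 where h: "bs = h # bs0" using nr1 by (cases bs) auto
  define y where "y = head G h"
  have wb: "is_walk G u1 bs" using w nr1 by (simp add: is_walk_app)
  then have hh: "h \<in> arcs G" "tail G h = u1" "head G h = y" and wb0: "is_walk G y bs0" using h y_def by auto
  have weq: "walk_end G y bs0 = v" using we nr1 h y_def by (simp add: walk_end_app walk_end_cons)
  have ph: "pe G h = []" using rs rsa h by simp
  have sb0: "\<forall>e\<in>set bs0. pe G e = []" using rs rsa h by simp
  have ch: "prefix (Lv G y) (Lv G v)" "bs0 \<noteq> [] \<longrightarrow> length (Lv G y) < length (Lv G v)"
    using prefix_chain[OF wb0 sb0] weq by auto
  have Lh: "Le G h = Lv G y" using arc_p[OF hh(1)] hh ph by simp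
  have "Le G h = Lv G u1 @ qe G h" using arc_q[OF hh(1)] hh by simp
  moreover have "qe G h \<noteq> []" using not_both hh ph by blast
  ultimately have lt: "length (Lv G u1) < length (Lv G y)" using Lh by (metis length_append less_add_same_cancel1 length_greater_0_conv)
  have hb2: "h \<noteq> b"
  proof (cases "bs0 = []")
    case True
    then have "last (f # rs) = h" using nr1 h by (metis append_Nil last_appendR last_snoc not_Cons_self2)
    then show ?thesis using hb by simp
  next
    case False
    then have "y \<noteq> v" using ch by auto
    then show ?thesis using hh b by auto
  qed
  have "longest_common_prefix (Le G b) (Le G h) = Lv G u1"
    using splitD_out[OF sp b(1) hh(1) hb2[symmetric]] hh u1_def by simp
  then have "Lv G y = Lv G u1" using Lb Lh lcp_prefix ch(1) by metis
  then show False using lt by simp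
qed

end


lemma nth_swap: "j < length a + length b \<Longrightarrow> (b @ a) ! j = (a @ b) ! ((j + length a) mod (length a + length b))"
proof (cases "j < length b")
  case True
  assume "j < length a + length b"
  then show ?thesis using True by (simp add: nth_append)
next
  case False
  assume j: "j < length a + length b"
  have ge: "length a + length b \<le> j + length a" using False by simp
  have "(j + length a) mod (length a + length b) = (j + length a - (length a + length b)) mod (length a + length b)"
    using le_mod_geq[OF ge] .
  also have "j + length a - (length a + length b) = j - length b" by simp
  also have "(j - length b) mod (length a + length b) = j - length b" using j False by simp
  finally have m: "(j + length a) mod (length a + length b) = j - length b" .
  have jl: "j - length b < length a" using j False by simp
  have "(b @ a) ! j = a ! (j - length b)" using False by (simp add: nth_append)
  also have "\<dots> = (a @ b) ! (j - length b)" using jl by (simp add: nth_append)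
  finally show ?thesis using m by simp
qed

lemma cyc_set_swap_sub: "cyc_set (a @ b) \<subseteq> cyc_set (b @ a)"
proof
  fix f assume "f \<in> cyc_set (a @ b)"
  then obtain k where f: "f = (\<lambda>i. (a @ b) ! nat ((i + k) mod int (length (a @ b))))" unfolding cyc_set_def by blast
  define n where "n = length a + length b"
  show "f \<in> cyc_set (b @ a)"
  proof (cases "n = 0")
    case True
    then show ?thesis using f unfolding cyc_set_def n_def by auto
  next
    case False
    then have n: "n > 0" by simp
    have "f = (\<lambda>i. (b @ a) ! nat ((i + (k - int (length a))) mod int (length (b @ a))))"
    proof
      fix i
      define m where "m = (i + (k - int (length a))) mod int n"
      have m0: "m \<ge> 0" "m < int n" using n unfolding m_def by auto
      have "(b @ a) ! nat m = (a @ b) ! ((nat m + length a) mod n)"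
        using nth_swap[of "nat m" a b] m0 unfolding n_def by simp
      also have "(nat m + length a) mod n = nat ((i + k) mod int n)"
      proof -
        have "int ((nat m + length a) mod n) = (m + int (length a)) mod int n"
          using m0 by (simp add: of_nat_mod)
        also have "\<dots> = (i + k) mod int n" unfolding m_def by (simp add: mod_add_left_eq)
        finally show ?thesis by simp
      qed
      finally have r: "(b @ a) ! nat m = (a @ b) ! nat ((i + k) mod int n)" .
      have l1: "length (b @ a) = n" "length (a @ b) = n" unfolding n_def by simp_all
      have "f i = (a @ b) ! nat ((i + k) mod int n)" by (simp only: f l1)
      also have "\<dots> = (b @ a) ! nat ((i + (k - int (length a))) mod int (length (b @ a)))"
        using r unfolding m_def by (simp only: l1)
      finally show "f i = (b @ a) ! nat ((i + (k - int (length a))) mod int (length (b @ a)))" .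
    qed
    then show ?thesis unfolding cyc_set_def by blast
  qed
qed

lemma cyc_swap: "cyc (a @ b) = cyc (b @ a)"
  unfolding cyc_def using cyc_set_swap_sub[of a b] cyc_set_swap_sub[of b a] by auto

lemma cyc_rotate: "cyc (concat (map g (rotate n c))) = cyc (concat (map g c))"
proof (induction n)
  case 0 then show ?case by simp
next
  case (Suc n)
  have "rotate (Suc n) c = rotate1 (rotate n c)" by simp
  moreover have "cyc (concat (map g (rotate1 xs))) = cyc (concat (map g xs))" for xs
  proof (cases xs)
    case Nil then show ?thesis by simp
  next
    case (Cons x xs')
    then show ?thesis using cyc_swap[of "concat (map g xs')" "g x"] by simp
  qed
  ultimately show ?case using Suc by simp
qed

lemma sublist_ext: "sublist s t \<Longrightarrow> s \<noteq> t \<Longrightarrow> \<exists>ch. sublist (s @ [ch]) t \<or> sublist (ch # s) t"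
proof -
  assume st: "sublist s t" "s \<noteq> t"
  then obtain p q where t: "t = p @ s @ q" unfolding sublist_def by blast
  have pq: "p \<noteq> [] \<or> q \<noteq> []" using t st(2) by auto
  show ?thesis
  proof (cases q)
    case (Cons ch q')
    then have "sublist (s @ [ch]) t" using t unfolding sublist_def by (intro exI[of _ p] exI[of _ q']) simp
    then show ?thesis by blast
  next
    case Nil
    then obtain p' ch where "p = p' @ [ch]" using pq by (cases p rule: rev_cases) auto
    then have "sublist (ch # s) t" using t Nil unfolding sublist_def by (intro exI[of _ p'] exI[of _ "[]"]) simp
    then show ?thesis by blast
  qed
qed

context ag begin

lemma circ_cw: "is_circuit G c \<Longrightarrow> cw G c"
  unfolding is_circuit_def cw_def walk_end_def by auto

lemma circ_label_cyc: "is_circuit G c \<Longrightarrow> circ_label G c = cyc (concat (map (qe G) c)) \<and> concat (map (qe G) c) \<noteq> []"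
  using circ_cw circ_label_X X_ne by blast

lemma walk_in_circ:
  assumes c: "cw G c" and sw: "subwalk G (Walk v es) (Circ c)"
  shows "lsubstr (Fin (wl G v es)) (Cyc (circ_label G c))"
proof -
  from sw obtain n as bs where "rep n c = as @ es @ bs" "v = walk_end G (tail G (hd c)) as"
    by (auto simp: sub_ww_def)
  then obtain k where "occ (wl G v es) (concat (map (qe G) c)) k" using lemA[OF c X_ne[OF c]] by blast
  then show ?thesis using circ_label_X[OF c] lsubstr_cyc[OF X_ne[OF c]] by auto
qed

lemma right_contra':
  assumes sp: "splitting G" and nr: "non_redundant G"
    and b: "b \<in> arcs G" "tail G b = u" "qe G b = []"
    and w: "is_walk G u xs" and xn: "xs \<noteq> []" and hb: "hd xs \<noteq> b" and q: "concat (map (qe G) xs) \<noteq> []"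
  shows False
proof -
  obtain rs f rest where x: "xs = rs @ f # rest" and rs: "\<forall>e\<in>set rs. qe G e = []" and f: "qe G f \<noteq> []"
    using split_first[OF q] by blast
  have w': "is_walk G u (rs @ [f])" using w x is_walk_app[of G u "rs @ [f]" rest] by simp
  have "hd (rs @ [f]) = hd xs" using x by (cases rs) auto
  then show False using right_contra[OF sp nr b w' _ rs f] hb by simp
qed

lemma left_contra':
  assumes sp: "splitting G" and nr: "non_redundant G"
    and b: "b \<in> arcs G" "head G b = v" "pe G b = []"
    and w: "is_walk G u0 xs" and we: "walk_end G u0 xs = v" and xn: "xs \<noteq> []"
    and hb: "last xs \<noteq> b" and q: "concat (map (pe G) xs) \<noteq> []"
  shows False
proof -
  obtain rest f rs where x: "xs = rest @ f # rs" and rs: "\<forall>e\<in>set rs. pe G e = []" and f: "pe G f \<noteq> []"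
    using split_last[OF q] by blast
  have w1: "is_walk G (walk_end G u0 rest) (f # rs)" using w x by (simp add: is_walk_app)
  then have tf: "tail G f = walk_end G u0 rest" by simp
  have w': "is_walk G (tail G f) (f # rs)" using w1 tf by simp
  have we': "walk_end G (tail G f) (f # rs) = v" using we x tf by (simp add: walk_end_app)
  have "last (f # rs) = last xs" using x by simp
  then show False using left_contra[OF sp nr b w' we' _ rs f] hb by simp
qed

lemma fe_right:
  assumes sp: "splitting G" and nr: "non_redundant G"
    and w1: "is_walk G u bs" and w2: "is_walk G u bs'" and n1: "bs \<noteq> []" and n2: "bs' \<noteq> []"
    and q1: "concat (map (qe G) bs) = ch # \<beta>1" and q2: "concat (map (qe G) bs') = ch # \<beta>2"
  shows "hd bs = hd bs'"
proof (rule ccontr)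
  assume ne: "hd bs \<noteq> hd bs'"
  obtain b r where b: "bs = b # r" using n1 by (cases bs) auto
  obtain b' r' where b': "bs' = b' # r'" using n2 by (cases bs') auto
  have bb: "b \<in> arcs G" "tail G b = u" using w1 b by auto
  have bb': "b' \<in> arcs G" "tail G b' = u" using w2 b' by auto
  have nb: "b \<noteq> b'" using ne b b' by simp
  show False
  proof (cases "qe G b = []")
    case True
    show False using right_contra'[OF sp nr bb True w2 n2] ne q2 b by simp
  next
    case F1: False
    show False
    proof (cases "qe G b' = []")
      case True
      show False using right_contra'[OF sp nr bb' True w1 n1] ne q1 b' by simp
    next
      case F2: False
      obtain x1 where x1: "qe G b = ch # x1" using F1 q1 b by (cases "qe G b") auto
      obtain x2 where x2: "qe G b' = ch # x2" using F2 q2 b' by (cases "qe G b'") auto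
      have "longest_common_prefix (Le G b) (Le G b') = Lv G u" using splitD_out[OF sp bb(1) bb'(1) nb bb(2) bb'(2)] .
      moreover have "Le G b = Lv G u @ ch # x1" using arc_q[OF bb(1)] bb x1 by simp
      moreover have "Le G b' = Lv G u @ ch # x2" using arc_q[OF bb'(1)] bb' x2 by simp
      ultimately show False using lcp_app[of "Lv G u" "ch # x1" "ch # x2"] by simp
    qed
  qed
qed

lemma fe_left:
  assumes sp: "splitting G" and nr: "non_redundant G"
    and w1: "is_walk G u as" and w2: "is_walk G u' as'" and n1: "as \<noteq> []" and n2: "as' \<noteq> []"
    and e1: "walk_end G u as = v" and e2: "walk_end G u' as' = v"
    and p1: "concat (map (pe G) as) = \<alpha>1 @ [ch]" and p2: "concat (map (pe G) as') = \<alpha>2 @ [ch]"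
  shows "last as = last as'"
proof (rule ccontr)
  assume ne: "last as \<noteq> last as'"
  obtain r b where b: "as = r @ [b]" using n1 by (cases as rule: rev_cases) auto
  obtain r' b' where b': "as' = r' @ [b']" using n2 by (cases as' rule: rev_cases) auto
  have bb: "b \<in> arcs G" "head G b = v" using w1 b e1 by (auto simp: is_walk_app walk_end_def)
  have bb': "b' \<in> arcs G" "head G b' = v" using w2 b' e2 by (auto simp: is_walk_app walk_end_def)
  have nb: "b \<noteq> b'" using ne b b' by simp
  show False
  proof (cases "pe G b = []")
    case True
    show False using left_contra'[OF sp nr bb True w2 e2 n2] ne p2 b by simp
  next
    case F1: False
    show False
    proof (cases "pe G b' = []")
      case True
      show False using left_contra'[OF sp nr bb' True w1 e1 n1] ne p1 b' by simp
    next
      case F2: False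
      obtain x1 where x1: "pe G b = x1 @ [ch]" using F1 p1 b by (cases "pe G b" rule: rev_cases) auto
      obtain x2 where x2: "pe G b' = x2 @ [ch]" using F2 p2 b' by (cases "pe G b'" rule: rev_cases) auto
      have "rev (longest_common_prefix (rev (Le G b)) (rev (Le G b'))) = Lv G v"
        using splitD_in[OF sp bb(1) bb'(1) nb bb(2) bb'(2)] .
      moreover have "rev (Le G b) = rev (Lv G v) @ ch # rev x1" using arc_p[OF bb(1)] bb x1 by simp
      moreover have "rev (Le G b') = rev (Lv G v) @ ch # rev x2" using arc_p[OF bb'(1)] bb' x2 by simp
      ultimately have "rev (rev (Lv G v) @ ch # longest_common_prefix (rev x1) (rev x2)) = Lv G v"
        using lcp_app[of "rev (Lv G v)" "ch # rev x1" "ch # rev x2"] by simp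
      then show False by (metis length_append length_rev list.size(4) add_Suc_right nat.simps(3) add_cancel_left_right)
    qed
  qed
qed

end


lemma app_same_len: "length a = length b \<Longrightarrow> a @ x = b @ y \<Longrightarrow> a = b \<and> x = y"
  by simp

lemma labels_iff: "(\<forall>C\<in>Labels_gpc G ` PP. \<exists>c\<in>C. Q c) \<longleftrightarrow> (\<forall>P\<in>PP. \<exists>c\<in>P. Q (circ_label G c))"
  unfolding Labels_gpc_def by auto

context ag begin

lemma substr_trans:
  assumes c: "is_circuit G c" and l: "lsubstr (Fin t) (Cyc (circ_label G c))" and sl: "sublist x t"
  shows "lsubstr (Fin x) (Cyc (circ_label G c))"
proof -
  have cl: "circ_label G c = cyc (concat (map (qe G) c))" and X: "concat (map (qe G) c) \<noteq> []"
    using circ_label_cyc[OF c] by auto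
  obtain k where o: "occ t (concat (map (qe G) c)) k" using l cl lsubstr_cyc[OF X] by auto
  obtain p q where t: "t = p @ x @ q" using sl unfolding sublist_def by blast
  have "occ x (concat (map (qe G) c)) (k + length p)" using occ_sub[OF o t] .
  then show ?thesis using cl lsubstr_cyc[OF X] by auto
qed

lemma right_data:
  assumes sp: "splitting G" and nr: "non_redundant G" and w: "is_walk G v es"
    and c: "is_circuit G c"
    and ls: "lsubstr (Fin (wl G v es @ [ch])) (Cyc (circ_label G c))"
  shows "\<exists>N as bs. rep N c = as @ es @ bs \<and> v = walk_end G (tail G (hd c)) as \<and> bs \<noteq> [] \<and> is_walk G (walk_end G v es) bs
     \<and> (\<exists>\<beta>. concat (map (qe G) bs) = ch # \<beta>)"
proof -
  define u where "u = walk_end G v es"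
  have cw: "cw G c" using c circ_cw by blast
  have X: "concat (map (qe G) c) \<noteq> []" using X_ne[OF cw] .
  have ls': "lsubstr (Fin (wl G v es @ [ch])) (Cyc (cyc (concat (map (qe G) c))))" using ls unfolding circ_label_X[OF cw] .
  obtain k where o: "occ (wl G v es @ [ch]) (concat (map (qe G) c)) k"
    using ls' unfolding lsubstr_cyc[OF X] by blast
  obtain N \<alpha> \<beta> where e: "wl G (tail G (hd c)) (rep N c) = \<alpha> @ (wl G v es @ [ch]) @ \<beta>" and an: "\<alpha> \<noteq> []" and bn: "\<beta> \<noteq> []"
    using lemB[OF cw X o] by (elim exE conjE) (rule that, assumption+)
  have wq: "is_walk G (tail G (hd c)) (rep N c)" using cw_rep[OF cw, THEN conjunct1] .
  have e': "wl G (tail G (hd c)) (rep N c) = \<alpha> @ wl G v es @ (ch # \<beta>)" using e by simp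
  obtain as bs where al: "rep N c = as @ es @ bs" "v = walk_end G (tail G (hd c)) as"
     "length (concat (map (pe G) as)) = length \<alpha>" "bs \<noteq> []"
    using align[OF nr wq w e' an] by (simp, elim exE conjE) (rule that, assumption+)
  have wf: "is_walk G (tail G (hd c)) (as @ es @ bs)" using wq unfolding al(1) .
  have E1: "wl G (tail G (hd c)) (as @ es @ bs) = \<alpha> @ wl G v es @ (ch # \<beta>)" using e' unfolding al(1) .
  have E2: "wl G (tail G (hd c)) (as @ es @ bs) = concat (map (pe G) as) @ (wl G v es @ concat (map (qe G) bs))"
    using wl_split[OF wf] unfolding al(2)[symmetric] wl_app .
  have EQ: "concat (map (pe G) as) @ (wl G v es @ concat (map (qe G) bs)) = \<alpha> @ (wl G v es @ (ch # \<beta>))"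
    using E2[symmetric] E1 by (rule trans)
  have "wl G v es @ concat (map (qe G) bs) = wl G v es @ (ch # \<beta>)"
    using conjunct2[OF app_same_len[OF al(3) EQ]] .
  then have q: "concat (map (qe G) bs) = ch # \<beta>" by simp
  have "is_walk G (walk_end G (tail G (hd c)) as) (es @ bs)" using wf by (simp add: is_walk_app)
  then have "is_walk G v (es @ bs)" using al(2) by simp
  then have wb: "is_walk G u bs" unfolding u_def by (simp add: is_walk_app)
  show ?thesis
    apply (rule exI[of _ N], rule exI[of _ as], rule exI[of _ bs])
    using al(1,2,4) wb q unfolding u_def by simp
qed


lemma right_ext:
  assumes sp: "splitting G" and nr: "non_redundant G" and w: "is_walk G v es" and ne: "PP \<noteq> {}"
    and cp: "\<forall>P\<in>PP. \<exists>c\<in>P. is_circuit G c \<and> lsubstr (Fin (wl G v es @ [ch])) (Cyc (circ_label G c))"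
  shows "\<exists>e. is_walk G v (es @ [e]) \<and> (\<forall>P\<in>PP. \<exists>c\<in>P. subwalk G (Walk v (es @ [e])) (Circ c))"
proof -
  define u where "u = walk_end G v es"
  note data = right_data[OF sp nr w, folded u_def]
  obtain P0 where P0: "P0 \<in> PP" using ne by blast
  obtain c0 where c0: "c0 \<in> P0" "is_circuit G c0" "lsubstr (Fin (wl G v es @ [ch])) (Cyc (circ_label G c0))"
    using cp P0 by blast
  obtain N0 as0 bs0 \<beta>0 where d0: "rep N0 c0 = as0 @ es @ bs0" "bs0 \<noteq> []" "is_walk G u bs0"
     "concat (map (qe G) bs0) = ch # \<beta>0"
    using data[OF c0(2,3)] by (elim exE conjE) (rule that, assumption+)
  define e where "e = hd bs0"
  obtain bt where bt: "bs0 = e # bt" using d0(2) unfolding e_def by (cases bs0) auto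
  have ee: "e \<in> arcs G" "tail G e = u" using d0(3) bt by auto
  have we: "is_walk G v (es @ [e])" using w ee arc_ends[OF ee(1)] unfolding u_def by (simp add: is_walk_app)
  have "\<forall>P\<in>PP. \<exists>c\<in>P. subwalk G (Walk v (es @ [e])) (Circ c)"
  proof
    fix P assume P: "P \<in> PP"
    obtain c where c: "c \<in> P" "is_circuit G c" "lsubstr (Fin (wl G v es @ [ch])) (Cyc (circ_label G c))"
      using cp P by blast
    obtain N as bs \<beta> where d: "rep N c = as @ es @ bs" "v = walk_end G (tail G (hd c)) as" "bs \<noteq> []" "is_walk G u bs"
     "concat (map (qe G) bs) = ch # \<beta>"
      using data[OF c(2,3)] by (elim exE conjE) (rule that, assumption+)
    have "hd bs = e" using fe_right[OF sp nr d(4) d0(3) d(3) d0(2) d(5) d0(4)] unfolding e_def .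
    then obtain bt' where "bs = e # bt'" using d(3) by (cases bs) auto
    then have "rep N c = as @ (es @ [e]) @ bt'" using d(1) by simp
    then have "sub_ww G v (es @ [e]) (tail G (hd c)) (rep N c)" using d(2) unfolding sub_ww_def
      by (intro exI[of _ as] exI[of _ bt']) simp
    then have "subwalk G (Walk v (es @ [e])) (Circ c)" by auto
    then show "\<exists>c\<in>P. subwalk G (Walk v (es @ [e])) (Circ c)" using c(1) by blast
  qed
  then show ?thesis using we by blast
qed

lemma left_data:
  assumes sp: "splitting G" and nr: "non_redundant G" and w: "is_walk G v es"
    and c: "is_circuit G c"
    and ls: "lsubstr (Fin (ch # wl G v es)) (Cyc (circ_label G c))"
  shows "\<exists>N as bs. rep N c = as @ es @ bs \<and> v = walk_end G (tail G (hd c)) as \<and> as \<noteq> [] \<and> is_walk G (tail G (hd c)) as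
     \<and> (\<exists>\<alpha>. concat (map (pe G) as) = \<alpha> @ [ch])"
proof -
  have cw: "cw G c" using c circ_cw by blast
  have X: "concat (map (qe G) c) \<noteq> []" using X_ne[OF cw] .
  have ls': "lsubstr (Fin (ch # wl G v es)) (Cyc (cyc (concat (map (qe G) c))))" using ls unfolding circ_label_X[OF cw] .
  obtain k where o: "occ (ch # wl G v es) (concat (map (qe G) c)) k"
    using ls' unfolding lsubstr_cyc[OF X] by blast
  obtain N \<alpha> \<beta> where e: "wl G (tail G (hd c)) (rep N c) = \<alpha> @ (ch # wl G v es) @ \<beta>" and an: "\<alpha> \<noteq> []" and bn: "\<beta> \<noteq> []"
    using lemB[OF cw X o] by (elim exE conjE) (rule that, assumption+)
  have wq: "is_walk G (tail G (hd c)) (rep N c)" using cw_rep[OF cw, THEN conjunct1] .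
  have e': "wl G (tail G (hd c)) (rep N c) = (\<alpha> @ [ch]) @ wl G v es @ \<beta>" using e by simp
  obtain as bs where al: "rep N c = as @ es @ bs" "v = walk_end G (tail G (hd c)) as"
     "length (concat (map (pe G) as)) = Suc (length \<alpha>)" "as \<noteq> []"
    using align[OF nr wq w e' _ bn] by (simp, elim exE conjE) (rule that, assumption+)
  have al3: "length (concat (map (pe G) as)) = length (\<alpha> @ [ch])" using al(3) by simp
  have wf: "is_walk G (tail G (hd c)) (as @ es @ bs)" using wq unfolding al(1) .
  have E1: "wl G (tail G (hd c)) (as @ es @ bs) = (\<alpha> @ [ch]) @ wl G v es @ \<beta>" using e' unfolding al(1) .
  have E2: "wl G (tail G (hd c)) (as @ es @ bs) = concat (map (pe G) as) @ (wl G v es @ concat (map (qe G) bs))"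
    using wl_split[OF wf] unfolding al(2)[symmetric] wl_app .
  have EQ: "concat (map (pe G) as) @ (wl G v es @ concat (map (qe G) bs)) = (\<alpha> @ [ch]) @ (wl G v es @ \<beta>)"
    using E2[symmetric] E1 by (rule trans)
  have q: "concat (map (pe G) as) = \<alpha> @ [ch]"
    using conjunct1[OF app_same_len[OF al3 EQ]] .
  have wa: "is_walk G (tail G (hd c)) as" using wf by (simp add: is_walk_app)
  show ?thesis
    apply (rule exI[of _ N], rule exI[of _ as], rule exI[of _ bs])
    using al(1,2,4) wa q by simp
qed


lemma left_ext:
  assumes sp: "splitting G" and nr: "non_redundant G" and w: "is_walk G v es" and ne: "PP \<noteq> {}"
    and cp: "\<forall>P\<in>PP. \<exists>c\<in>P. is_circuit G c \<and> lsubstr (Fin (ch # wl G v es)) (Cyc (circ_label G c))"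
  shows "\<exists>e. is_walk G (tail G e) (e # es) \<and> head G e = v \<and> (\<forall>P\<in>PP. \<exists>c\<in>P. subwalk G (Walk (tail G e) (e # es)) (Circ c))"
proof -
  note data = left_data[OF sp nr w]
  obtain P0 where P0: "P0 \<in> PP" using ne by blast
  obtain c0 where c0: "c0 \<in> P0" "is_circuit G c0" "lsubstr (Fin (ch # wl G v es)) (Cyc (circ_label G c0))"
    using cp P0 by blast
  obtain N0 as0 bs0 \<alpha>0 where d0: "rep N0 c0 = as0 @ es @ bs0" "v = walk_end G (tail G (hd c0)) as0" "as0 \<noteq> []"
     "is_walk G (tail G (hd c0)) as0" "concat (map (pe G) as0) = \<alpha>0 @ [ch]"
    using data[OF c0(2,3)] by (elim exE conjE) (rule that, assumption+)
  define e where "e = last as0"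
  define r0 where "r0 = butlast as0"
  have r0: "as0 = r0 @ [e]" using d0(3) unfolding e_def r0_def by simp
  have w0: "is_walk G (walk_end G (tail G (hd c0)) r0) [e]"
    using d0(4) is_walk_app[of G "tail G (hd c0)" r0 "[e]"] unfolding r0[symmetric] by blast
  have ee12: "e \<in> arcs G" "tail G e = walk_end G (tail G (hd c0)) r0" using w0 by auto
  have "walk_end G (tail G (hd c0)) as0 = head G e" unfolding r0 walk_end_app by (simp add: walk_end_def)
  then have ee3: "head G e = v" using d0(2) by simp
  note ee = ee12(1) ee3 ee12(2)
  have we: "is_walk G (tail G e) (e # es)" using w ee(1,2) arc_ends[OF ee(1)] by simp
  have "\<forall>P\<in>PP. \<exists>c\<in>P. subwalk G (Walk (tail G e) (e # es)) (Circ c)"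
  proof
    fix P assume P: "P \<in> PP"
    obtain c where c: "c \<in> P" "is_circuit G c" "lsubstr (Fin (ch # wl G v es)) (Cyc (circ_label G c))"
      using cp P by blast
    obtain N as bs \<alpha> where d: "rep N c = as @ es @ bs" "v = walk_end G (tail G (hd c)) as" "as \<noteq> []"
     "is_walk G (tail G (hd c)) as" "concat (map (pe G) as) = \<alpha> @ [ch]"
      using data[OF c(2,3)] by (elim exE conjE) (rule that, assumption+)
    have "last as = e" using fe_left[OF sp nr d(4) d0(4) d(3) d0(3) d(2)[symmetric] d0(2)[symmetric] d(5) d0(5)]
      unfolding e_def .
    define r where "r = butlast as"
    have r: "as = r @ [e]" using d(3) \<open>last as = e\<close> unfolding r_def by (metis append_butlast_last_id)
    have wr: "is_walk G (walk_end G (tail G (hd c)) r) [e]"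
      using d(4) is_walk_app[of G "tail G (hd c)" r "[e]"] unfolding r[symmetric] by blast
    have "tail G e = walk_end G (tail G (hd c)) r" using wr by simp
    moreover have "rep N c = r @ (e # es) @ bs" using d(1) r by simp
    ultimately have "sub_ww G (tail G e) (e # es) (tail G (hd c)) (rep N c)" unfolding sub_ww_def
      by (intro exI[of _ r] exI[of _ bs]) simp
    then have "subwalk G (Walk (tail G e) (e # es)) (Circ c)" by auto
    then show "\<exists>c\<in>P. subwalk G (Walk (tail G e) (e # es)) (Circ c)" using c(1) by blast
  qed
  then show ?thesis using we ee(2) by (intro exI[of _ e] conjI)
qed

lemma OA_I:
  assumes "\<forall>P\<in>PP. \<exists>c\<in>P. lsubstr s (Cyc (circ_label G c))"
    and "\<And>t. \<forall>P\<in>PP. \<exists>c\<in>P. lsubstr t (Cyc (circ_label G c)) \<Longrightarrow> lsubstr s t \<Longrightarrow> lsubstr t s"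
  shows "s \<in> OA (Labels_gpc G ` PP)"
  unfolding OA_def mem_Collect_eq labels_iff using assms by blast

lemma OGA_D:
  assumes "w \<in> OGA G PP"
  shows "valid_wobj G w" "\<forall>P\<in>PP. \<exists>c\<in>P. subwalk G w (Circ c)"
    "\<And>w'. valid_wobj G w' \<Longrightarrow> \<forall>P\<in>PP. \<exists>c\<in>P. subwalk G w' (Circ c) \<Longrightarrow> subwalk G w w' \<Longrightarrow> subwalk G w' w"
  using assms unfolding OGA_def mem_Collect_eq by blast+

lemma dir2:
  assumes sp: "splitting G" and nr: "non_redundant G"
  shows "weakly_contig_preserving G"
  unfolding weakly_contig_preserving_def
proof (intro allI impI subsetI)
  fix PP x
  assume gpc: "\<forall>P\<in>PP. genome_path_candidate G P" and x: "x \<in> obj_label G ` OGA G PP"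
  then obtain w where w: "w \<in> OGA G PP" and xw: "x = obj_label G w" by blast
  note valid = OGA_D(1)[OF w] and common = OGA_D(2)[OF w] and maxi = OGA_D(3)[OF w]
  have circs: "\<And>P c. P \<in> PP \<Longrightarrow> c \<in> P \<Longrightarrow> is_circuit G c"
    using gpc unfolding genome_path_candidate_def by blast
  show "x \<in> OA (Labels_gpc G ` PP)"
  proof (cases w)
    case (Circ cs)
    have cs: "is_circuit G cs" using valid Circ by simp
    have p1: "\<forall>P\<in>PP. \<exists>c\<in>P. lsubstr (Cyc (circ_label G cs)) (Cyc (circ_label G c))"
    proof
      fix P assume P: "P \<in> PP"
      obtain c where c: "c \<in> P" "subwalk G (Circ cs) (Circ c)" using common Circ P by blast
      obtain n where n: "cs = rotate n c" using c(2) by auto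
      have cc: "is_circuit G c" using circs P c(1) by blast
      have "circ_label G cs = cyc (concat (map (qe G) cs))" using circ_label_cyc[OF cs] by blast
      also have "\<dots> = cyc (concat (map (qe G) c))" unfolding n by (rule cyc_rotate)
      also have "\<dots> = circ_label G c" using circ_label_cyc[OF cc] by simp
      finally have "lsubstr (Cyc (circ_label G cs)) (Cyc (circ_label G c))" by simp
      then show "\<exists>c\<in>P. lsubstr (Cyc (circ_label G cs)) (Cyc (circ_label G c))" using c(1) by blast
    qed
    have p2: "lsubstr t (Cyc (circ_label G cs))" if "lsubstr (Cyc (circ_label G cs)) t" for t
      using that by (cases t) auto
    have ol: "obj_label G w = Cyc (circ_label G cs)" using Circ by simp
    have "Cyc (circ_label G cs) \<in> OA (Labels_gpc G ` PP)" by (rule OA_I[OF p1]) (rule p2)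
    then show ?thesis unfolding xw ol .
  next
    case (Walk v es)
    have wv: "is_walk G v es" using valid Walk by simp
    define s where "s = wl G v es"
    have xs: "x = Fin s" using xw Walk walk_label_wl[OF wv] s_def by simp
    have p1: "\<forall>P\<in>PP. \<exists>c\<in>P. lsubstr (Fin s) (Cyc (circ_label G c))"
    proof
      fix P assume P: "P \<in> PP"
      have cm: "\<forall>P\<in>PP. \<exists>c\<in>P. subwalk G (Walk v es) (Circ c)" using common unfolding Walk .
      obtain c where c: "c \<in> P" "subwalk G (Walk v es) (Circ c)" using cm P by blast
      have "cw G c" using circ_cw[OF circs[OF P c(1)]] .
      then have "lsubstr (Fin s) (Cyc (circ_label G c))" unfolding s_def by (rule walk_in_circ[OF _ c(2)])
      then show "\<exists>c\<in>P. lsubstr (Fin s) (Cyc (circ_label G c))" using c(1) by blast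
    qed
    have no_right: False if e: "is_walk G v (es @ [e])" "\<forall>P\<in>PP. \<exists>c\<in>P. subwalk G (Walk v (es @ [e])) (Circ c)" for e
    proof -
      have "sub_ww G v es v (es @ [e])" unfolding sub_ww_def
        by (rule exI[of _ "[]"], rule exI[of _ "[e]"]) (simp add: walk_end_def)
      then have "subwalk G w (Walk v (es @ [e]))" unfolding Walk by simp
      moreover have "valid_wobj G (Walk v (es @ [e]))" using e(1) by simp
      ultimately have "subwalk G (Walk v (es @ [e])) w" using maxi[OF _ e(2)] by blast
      then have "sub_ww G v (es @ [e]) v es" unfolding Walk by simp
      then obtain as bs where "es = as @ (es @ [e]) @ bs" unfolding sub_ww_def by (elim exE conjE) (rule that)
      then have "length es = length (as @ (es @ [e]) @ bs)" by (rule arg_cong)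
      then show False by simp
    qed
    have no_left: False if e: "is_walk G (tail G e) (e # es)" "head G e = v"
        "\<forall>P\<in>PP. \<exists>c\<in>P. subwalk G (Walk (tail G e) (e # es)) (Circ c)" for e
    proof -
      have "sub_ww G v es (tail G e) (e # es)" unfolding sub_ww_def
        by (rule exI[of _ "[e]"], rule exI[of _ "[]"]) (simp add: walk_end_def e(2))
      then have "subwalk G w (Walk (tail G e) (e # es))" unfolding Walk by simp
      moreover have "valid_wobj G (Walk (tail G e) (e # es))" using e(1) by simp
      ultimately have "subwalk G (Walk (tail G e) (e # es)) w" using maxi[OF _ e(3)] by blast
      then have "sub_ww G (tail G e) (e # es) v es" unfolding Walk by simp
      then obtain as bs where "es = as @ (e # es) @ bs" unfolding sub_ww_def by (elim exE conjE) (rule that)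
      then have "length es = length (as @ (e # es) @ bs)" by (rule arg_cong)
      then show False by simp
    qed
    have p2: "lsubstr t (Fin s)" if tc: "\<forall>P\<in>PP. \<exists>c\<in>P. lsubstr t (Cyc (circ_label G c))" and st: "lsubstr (Fin s) t" for t
    proof (rule ccontr)
      assume nt: "\<not> lsubstr t (Fin s)"
      show False
      proof (cases "PP = {}")
        case True
        obtain e where e: "e \<in> arcs G" "tail G e = walk_end G v es"
          using out_in_edge[OF asm walk_end_verts[OF wv]] by blast
        have "is_walk G v (es @ [e])" using wv e arc_ends[OF e(1)] by (simp add: is_walk_app)
        moreover have "\<forall>P\<in>PP. \<exists>c\<in>P. subwalk G (Walk v (es @ [e])) (Circ c)" using True by simp
        ultimately show False by (rule no_right)
      next
        case ne: False
        define R where "R = (\<lambda>ch. \<forall>P\<in>PP. \<exists>c\<in>P. is_circuit G c \<and> lsubstr (Fin (s @ [ch])) (Cyc (circ_label G c)))"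
        define L where "L = (\<lambda>ch. \<forall>P\<in>PP. \<exists>c\<in>P. is_circuit G c \<and> lsubstr (Fin (ch # s)) (Cyc (circ_label G c)))"
        have ext: "\<exists>ch. R ch \<or> L ch"
        proof (cases t)
          case (Fin t')
          have sl: "sublist s t'" using st Fin by simp
          have "s \<noteq> t'" using nt Fin by auto
          then obtain ch where ch: "sublist (s @ [ch]) t' \<or> sublist (ch # s) t'" using sublist_ext[OF sl] by blast
          have tc': "\<forall>P\<in>PP. \<exists>c\<in>P. is_circuit G c \<and> lsubstr (Fin t') (Cyc (circ_label G c))"
            using tc Fin circs by blast
          show ?thesis
          proof (cases "sublist (s @ [ch]) t'")
            case True
            have "R ch" unfolding R_def
            proof
              fix P assume P: "P \<in> PP"
              obtain c where c: "c \<in> P" "is_circuit G c" "lsubstr (Fin t') (Cyc (circ_label G c))" using tc' P by blast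
              then show "\<exists>c\<in>P. is_circuit G c \<and> lsubstr (Fin (s @ [ch])) (Cyc (circ_label G c))"
                using substr_trans[OF c(2,3) True] by blast
            qed
            then show ?thesis by blast
          next
            case False
            then have F: "sublist (ch # s) t'" using ch by blast
            have "L ch" unfolding L_def
            proof
              fix P assume P: "P \<in> PP"
              obtain c where c: "c \<in> P" "is_circuit G c" "lsubstr (Fin t') (Cyc (circ_label G c))" using tc' P by blast
              then show "\<exists>c\<in>P. is_circuit G c \<and> lsubstr (Fin (ch # s)) (Cyc (circ_label G c))"
                using substr_trans[OF c(2,3) F] by blast
            qed
            then show ?thesis by blast
          qed
        next
          case (Cyc d)
          obtain P0 where P0: "P0 \<in> PP" using ne by blast
          obtain c0 where c0: "c0 \<in> P0" "lsubstr (Cyc d) (Cyc (circ_label G c0))" using tc Cyc P0 by blast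
          have cc0: "is_circuit G c0" using circs P0 c0(1) by blast
          define X0 where "X0 = concat (map (qe G) c0)"
          have d0: "d = circ_label G c0" using c0(2) by simp
          have d: "d = cyc X0" and X0: "X0 \<noteq> []" using d0 circ_label_cyc[OF cc0] unfolding X0_def by auto
          have "lsubstr (Fin s) (Cyc (cyc X0))" using st Cyc d by simp
          then obtain k where o: "occ s X0 k" unfolding lsubstr_cyc[OF X0] by blast
          define ch where "ch = X0 ! ((k + length s) mod length X0)"
          have "occ (s @ [ch]) X0 k" using o unfolding occ_def ch_def by (auto simp: nth_append less_Suc_eq)
          then have l: "lsubstr (Fin (s @ [ch])) (Cyc d)" unfolding d lsubstr_cyc[OF X0] by blast
          have "R ch" unfolding R_def
          proof
            fix P assume P: "P \<in> PP"
            obtain c where c: "c \<in> P" "lsubstr (Cyc d) (Cyc (circ_label G c))" using tc Cyc P by blast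
            have "d = circ_label G c" using c(2) by simp
            then show "\<exists>c\<in>P. is_circuit G c \<and> lsubstr (Fin (s @ [ch])) (Cyc (circ_label G c))"
              using l circs[OF P c(1)] c(1) by metis
          qed
          then show ?thesis by blast
        qed
        then obtain ch where ch: "R ch \<or> L ch" by blast
        then show False
        proof
          assume r: "R ch"
          obtain e where e: "is_walk G v (es @ [e])" "\<forall>P\<in>PP. \<exists>c\<in>P. subwalk G (Walk v (es @ [e])) (Circ c)"
            using right_ext[OF sp nr wv ne r[unfolded R_def s_def]] by blast
          show False using no_right[OF e] .
        next
          assume l: "L ch"
          obtain e where e: "is_walk G (tail G e) (e # es)" "head G e = v"
              "\<forall>P\<in>PP. \<exists>c\<in>P. subwalk G (Walk (tail G e) (e # es)) (Circ c)"
            using left_ext[OF sp nr wv ne l[unfolded L_def s_def]] by blast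
          show False using no_left[OF e] .
        qed
      qed
    qed
    show ?thesis unfolding xs by (rule OA_I[OF p1]) (rule p2)
  qed
qed

end


lemma rep_Suc_right: "rep (Suc n) c = rep n c @ c"
  by (induction n) auto

lemma rep_set: "set (rep n c) \<subseteq> set c"
  by (induction n) auto

lemma seg_sub: "rep n c = as @ es @ bs \<Longrightarrow> set es \<subseteq> set c"
  using rep_set[of n c] by (metis Un_subset_iff set_append)

lemma seg_all:
  assumes r: "rep n c = as @ es @ bs" and c: "c \<noteq> []" and l: "length c \<le> length es"
  shows "set c \<subseteq> set es"
proof
  fix y assume "y \<in> set c"
  then obtain j where j: "j < length c" "c ! j = y" by (metis in_set_conv_nth)
  define n' where "n' = length c"
  define p where "p = length as"
  define i where "i = (j + n' - p mod n') mod n'"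
  have n': "n' > 0" using c unfolding n'_def by simp
  have i: "i < length es" using l n' unfolding i_def n'_def by (meson le_trans mod_less_divisor not_le)
  have es_i: "es ! i = rep n c ! (p + i)" using r i unfolding p_def by (simp add: nth_append)
  have tot: "p + i < n * length c" using r i unfolding p_def by (metis length_append length_rep add_less_cancel_left trans_less_add1 add.assoc)
  have "rep n c ! (p + i) = c ! ((p + i) mod n')" using nth_rep[OF tot] unfolding n'_def .
  moreover have "(p + i) mod n' = j"
  proof -
    have pm: "p mod n' < n'" using n' by simp
    have "(p + i) mod n' = (p mod n' + i) mod n'" by (simp add: mod_add_left_eq)
    also have "\<dots> = (p mod n' + (j + n' - p mod n')) mod n'" unfolding i_def by (simp add: mod_add_right_eq)
    also have "p mod n' + (j + n' - p mod n') = j + n'" using pm by simp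
    also have "(j + n') mod n' = j" using j(1) unfolding n'_def by simp
    finally show ?thesis .
  qed
  ultimately have "es ! i = y" using es_i j(2) by simp
  then show "y \<in> set es" using i by (metis nth_mem)
qed

lemma distinct_same: "distinct (map f xs) \<Longrightarrow> a \<in> set xs \<Longrightarrow> b \<in> set xs \<Longrightarrow> f a = f b \<Longrightarrow> a = b"
  by (metis distinct_map inj_onD)

context ag begin

lemma dcycle_rot:
  assumes d: "is_dcycle G v1 es1" and sp: "es1 = xs @ e # ys"
  shows "is_circuit G (e # ys @ xs) \<and> distinct (map (tail G) (e # ys @ xs)) \<and> distinct (map (head G) (e # ys @ xs))"
proof -
  have w: "is_walk G v1 (xs @ e # ys)" and we: "walk_end G v1 (xs @ e # ys) = v1" and dt: "distinct (map (tail G) (xs @ e # ys))"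
    using d sp unfolding is_dcycle_def by auto
  define m where "m = walk_end G v1 xs"
  have wx: "is_walk G v1 xs" and wm: "is_walk G m (e # ys)" using w unfolding m_def by (simp_all add: is_walk_app)
  have tm: "tail G e = m" using wm by simp
  have em: "walk_end G m (e # ys) = v1" using we unfolding m_def by (simp add: walk_end_app)
  define C where "C = e # ys @ xs"
  have wC: "is_walk G m C" unfolding C_def using wm wx em is_walk_app[of G m "e # ys" xs] by simp
  have eC: "walk_end G m C = m" unfolding C_def using em walk_end_app[of G m "e # ys" xs] m_def by simp
  have dC: "distinct (map (tail G) C)" using dt unfolding C_def by auto
  have np: "\<not> (\<exists>ys' k. k \<ge> 2 \<and> C = concat (replicate k ys'))"
  proof
    assume "\<exists>ys' k. k \<ge> 2 \<and> C = concat (replicate k ys')"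
    then obtain ys' k where k: "k \<ge> 2" "C = concat (replicate k ys')" by blast
    then obtain k' where k': "k = Suc (Suc k')" by (metis add_2_eq_Suc le_Suc_ex)
    have "C = ys' @ ys' @ concat (replicate k' ys')" using k k' by simp
    moreover have "ys' \<noteq> []" using k k' unfolding C_def by auto
    ultimately have "\<not> distinct (map (tail G) C)" by (cases ys') auto
    then show False using dC by simp
  qed
  have circ: "is_circuit G C" unfolding is_circuit_def using wC eC np tm unfolding C_def walk_end_def by auto
  have th: "map (tail G) C @ [m] = m # map (head G) C" using tails_heads[OF wC] eC by simp
  have "map (head G) C = tl (map (tail G) C) @ [m]" using th unfolding C_def by simp
  moreover have "map (tail G) C = m # tl (map (tail G) C)" unfolding C_def using tm by simp
  ultimately have "distinct (map (head G) C)" using dC by (metis distinct.simps(2) distinct1_rotate rotate1.simps(2))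
  then show ?thesis using circ dC unfolding C_def by blast
qed

lemma get_circ:
  assumes e: "e \<in> arcs G"
  shows "\<exists>C. is_circuit G C \<and> hd C = e \<and> distinct (map (tail G) C) \<and> distinct (map (head G) C)"
proof -
  have "\<forall>e\<in>arcs G. \<exists>v es. is_dcycle G v es \<and> e \<in> set es" using asm by (simp add: assembly_graph_def)
  then obtain v1 es1 where d: "is_dcycle G v1 es1" and ein: "e \<in> set es1" using e by blast
  obtain xs ys where "es1 = xs @ e # ys" using ein by (metis split_list)
  then show ?thesis using dcycle_rot[OF d] by (intro exI[of _ "e # ys @ xs"]) simp
qed

lemma sub_circ_set: "subwalk G (Walk x es) (Circ c) \<Longrightarrow> set es \<subseteq> set c"
  by (auto dest: seg_sub simp: sub_ww_def)

lemma common_bound: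
  assumes c1: "distinct (map f C2)" "e1 \<in> set C1" "e2 \<in> set C2" "f e1 = f e2" "e1 \<noteq> e2" "C1 \<noteq> []"
    and s1: "subwalk G (Walk x es) (Circ C1)" and s2: "subwalk G (Walk x es) (Circ C2)"
  shows "length es < length C1"
proof (rule ccontr)
  assume "\<not> length es < length C1"
  then have l: "length C1 \<le> length es" by simp
  obtain n as bs where "rep n C1 = as @ es @ bs" using s1 by (auto simp: sub_ww_def)
  then have "set C1 \<subseteq> set es" using seg_all c1(6) l by blast
  then have "e1 \<in> set C2" using sub_circ_set[OF s2] c1(2) by blast
  then show False using distinct_same[OF c1(1) _ c1(3) c1(4)] c1(5) by blast
qed

lemma ext_right_circ:
  assumes C: "is_circuit G C" "distinct (map (tail G) C)" "e \<in> set C"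
    and s: "subwalk G (Walk x es) (Circ C)" and wx: "is_walk G x es" and te: "tail G e = walk_end G x es"
  shows "subwalk G (Walk x (es @ [e])) (Circ C)"
proof -
  have cw: "cw G C" using circ_cw[OF C(1)] .
  obtain n as bs where r: "rep n C = as @ es @ bs" and xa: "x = walk_end G (tail G (hd C)) as"
    using s by (auto simp: sub_ww_def)
  have r1: "rep (Suc n) C = as @ es @ (bs @ C)" unfolding rep_Suc_right r by simp
  have w1: "is_walk G (tail G (hd C)) (as @ es @ (bs @ C))" using cw_rep[OF cw, of "Suc n"] r1 by metis
  obtain b rest where br: "bs @ C = b # rest" using C(1) unfolding is_circuit_def by (cases "bs @ C") auto
  have "is_walk G (walk_end G x es) (b # rest)"
    using w1 br xa by (simp add: is_walk_app walk_end_app)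
  then have tb: "tail G b = walk_end G x es" by simp
  have "b \<in> set C" using br seg_sub[OF r] rep_set[of n C] r
    by (metis Un_iff list.set_intros(1) set_append subsetD \<open>bs @ C = b # rest\<close> seg_sub)
  then have "b = e" using distinct_same[OF C(2) _ C(3)] tb te by simp
  then have "rep (Suc n) C = as @ (es @ [e]) @ rest" using r1 br by simp
  then show ?thesis using xa unfolding subwalk.simps sub_ww_def by blast
qed

end


context ag begin

lemma ext_left_circ:
  assumes C: "is_circuit G C" "distinct (map (head G) C)" "e \<in> set C"
    and s: "subwalk G (Walk x es) (Circ C)" and hx: "head G e = x"
  shows "subwalk G (Walk (tail G e) (e # es)) (Circ C)"
proof -
  have cw: "cw G C" using circ_cw[OF C(1)] .
  define u where "u = tail G (hd C)"
  obtain n as bs where r: "rep n C = as @ es @ bs" and xa: "x = walk_end G u as"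
    using s unfolding u_def by (auto simp: sub_ww_def)
  define A where "A = C @ as"
  have r1: "rep (Suc n) C = A @ es @ bs" unfolding A_def using r by simp
  have An: "A \<noteq> []" using C(1) unfolding A_def is_circuit_def by simp
  have w1: "is_walk G u (A @ es @ bs)" using cw_rep[OF cw, of "Suc n"] r1 unfolding u_def by metis
  then have wA: "is_walk G u A" by (simp add: is_walk_app)
  have ceq: "walk_end G u C = u" using cw unfolding cw_def u_def by simp
  have eA: "walk_end G u A = x" unfolding A_def walk_end_app ceq xa ..
  define a where "a = last A"
  define B where "B = butlast A"
  have AB: "A = B @ [a]" using An unfolding a_def B_def by simp
  have wa: "is_walk G (walk_end G u B) [a]" using wA AB is_walk_app[of G u B "[a]"] by simp
  have ha: "head G a = x" using eA AB by (simp add: walk_end_app walk_end_def)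
  have ta: "tail G a = walk_end G u B" using wa by simp
  have "a \<in> set A" using AB by simp
  moreover have "set as \<subseteq> set C" using r rep_set[of n C] by (metis Un_subset_iff set_append)
  ultimately have "a \<in> set C" unfolding A_def by auto
  then have "a = e" using distinct_same[OF C(2) _ C(3)] ha hx by simp
  then have "rep (Suc n) C = B @ (e # es) @ bs" and "tail G e = walk_end G u B" using r1 AB ta by simp_all
  then have "sub_ww G (tail G e) (e # es) u (rep (Suc n) C)" unfolding sub_ww_def by blast
  then show ?thesis unfolding u_def subwalk.simps by (rule exI[of _ "Suc n"])
qed

lemma not_common_circ:
  assumes "e1 \<in> set C1" "e2 \<in> set C2" "distinct (map f C2)" "f e1 = f e2" "e1 \<noteq> e2"
    and "subwalk G (Circ cs) (Circ C1)" "subwalk G (Circ cs) (Circ C2)"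
  shows False
proof -
  obtain n1 where n1: "cs = rotate n1 C1" using assms(6) by auto
  obtain n2 where n2: "cs = rotate n2 C2" using assms(7) by auto
  have "set C1 = set cs" unfolding n1 by simp
  also have "\<dots> = set C2" unfolding n2 by simp
  finally have "set C1 = set C2" .
  then show False using assms(1-5) distinct_same by metis
qed

lemma gpc_single: "is_circuit G C \<Longrightarrow> genome_path_candidate G {C}"
  unfolding genome_path_candidate_def by simp

lemma out_case:
  assumes wcp: "weakly_contig_preserving G" and e: "e1 \<in> arcs G" "e2 \<in> arcs G" "e1 \<noteq> e2"
    "tail G e1 = v" "tail G e2 = v" and q: "qe G e1 = ch # x1" "qe G e2 = ch # x2"
  shows False
proof -
  obtain C1 where C1: "is_circuit G C1" "hd C1 = e1" "distinct (map (tail G) C1)" "distinct (map (head G) C1)"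
    using get_circ[OF e(1)] by blast
  obtain C2 where C2: "is_circuit G C2" "hd C2 = e2" "distinct (map (tail G) C2)" "distinct (map (head G) C2)"
    using get_circ[OF e(2)] by blast
  have ne1: "C1 \<noteq> []" and ne2: "C2 \<noteq> []" using C1(1) C2(1) unfolding is_circuit_def by auto
  have i1: "e1 \<in> set C1" using C1(2) ne1 by (metis list.set_sel(1))
  have i2: "e2 \<in> set C2" using C2(2) ne2 by (metis list.set_sel(1))
  have v: "v \<in> verts G" using arc_ends[OF e(1)] e(4) by simp
  define Pd where "Pd = (\<lambda>(x, es). is_walk G x es \<and> subwalk G (Walk x es) (Circ C1) \<and> subwalk G (Walk x es) (Circ C2) \<and> walk_end G x es = v)"
  have s0: "subwalk G (Walk v []) (Circ C)" if "hd C = e" "tail G e = v" for C e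
    unfolding subwalk.simps sub_ww_def
    by (rule exI[of _ 0], rule exI[of _ "[]"], rule exI[of _ "[]"]) (simp add: that walk_end_def)
  have P0: "Pd (v, [])" unfolding Pd_def using v s0[OF C1(2) e(4)] s0[OF C2(2) e(5)] by (simp add: walk_end_def)
  have bnd: "\<forall>y. Pd y \<longrightarrow> length (snd y) < length C1"
  proof (intro allI impI)
    fix y assume "Pd y"
    then obtain x es where y: "y = (x, es)" "subwalk G (Walk x es) (Circ C1)" "subwalk G (Walk x es) (Circ C2)"
      unfolding Pd_def by (cases y) auto
    show "length (snd y) < length C1"
      using common_bound[OF C2(3) i1 i2 _ e(3) ne1 y(2,3)] e(4,5) y(1) by simp
  qed
  obtain W where W: "Pd W" and Wmax: "\<forall>y. Pd y \<longrightarrow> length (snd y) \<le> length (snd W)"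
    using ex_has_greatest_nat[OF P0 bnd] by blast
  obtain x es where Wx: "W = (x, es)" by (cases W)
  have wx: "is_walk G x es" and s1: "subwalk G (Walk x es) (Circ C1)" and s2: "subwalk G (Walk x es) (Circ C2)"
    and ev: "walk_end G x es = v" using W Wx unfolding Pd_def by auto
  define PP where "PP = {{C1}, {C2}}"
  have gpc: "\<forall>P\<in>PP. genome_path_candidate G P" unfolding PP_def using gpc_single C1(1) C2(1) by blast
  have inO: "Walk x es \<in> OGA G PP"
    unfolding OGA_def mem_Collect_eq
  proof (intro conjI allI impI)
    show "valid_wobj G (Walk x es)" using wx by simp
    show "\<forall>P\<in>PP. \<exists>c\<in>P. subwalk G (Walk x es) (Circ c)" unfolding PP_def using s1 s2 by blast
  next
    fix w' assume h: "valid_wobj G w' \<and> (\<forall>P\<in>PP. \<exists>c\<in>P. subwalk G w' (Circ c)) \<and> subwalk G (Walk x es) w'"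
    then have c1: "subwalk G w' (Circ C1)" and c2: "subwalk G w' (Circ C2)" unfolding PP_def by auto
    show "subwalk G w' (Walk x es)"
    proof (cases w')
      case (Circ cs)
      show ?thesis using not_common_circ[OF i1 i2 C2(3) _ e(3)] c1 c2 Circ e(4,5) by simp
    next
      case (Walk x' es')
      have wx': "is_walk G x' es'" using h Walk by simp
      obtain as bs where sw: "es' = as @ es @ bs" "x = walk_end G x' as" using h Walk by (auto simp: sub_ww_def)
      have bs: "bs = []"
      proof (rule ccontr)
        assume "bs \<noteq> []"
        then obtain b bt where b: "bs = b # bt" by (cases bs) auto
        have "is_walk G (walk_end G x' (as @ es)) (b # bt)" using wx' sw b is_walk_app[of G x' "as @ es" "b # bt"] by simp
        then have tb: "tail G b = v" using sw(2) ev by (simp add: walk_end_app)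
        have "b \<in> set es'" using sw b by simp
        then have "b \<in> set C1" "b \<in> set C2" using sub_circ_set c1 c2 Walk by blast+
        then have "b = e1" "b = e2" using distinct_same[OF C1(3) _ i1] distinct_same[OF C2(3) _ i2] tb e(4,5) by auto
        then show False using e(3) by simp
      qed
      have "walk_end G x' es' = v" using sw bs ev by (simp add: walk_end_app)
      then have "Pd (x', es')" unfolding Pd_def using wx' c1 c2 Walk by simp
      then have "length es' \<le> length es" using Wmax Wx by fastforce
      then have "as = []" using sw bs by simp
      then have "w' = Walk x es" using sw bs Walk by (simp add: walk_end_def)
      then show ?thesis by (simp add: sub_ww_def) (rule exI[of _ "[]"], simp add: walk_end_def)
    qed
  qed
  have "obj_label G (Walk x es) \<in> OA (Labels_gpc G ` PP)" using wcp gpc inO unfolding weakly_contig_preserving_def by blast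
  moreover have "obj_label G (Walk x es) = Fin (wl G x es)" using walk_label_wl[OF wx] by simp
  ultimately have oa: "Fin (wl G x es) \<in> OA (Labels_gpc G ` PP)" by simp
  define t where "t = Fin (wl G x es @ [ch])"
  have tc: "lsubstr t (Cyc (circ_label G C))" if C: "is_circuit G C" "distinct (map (tail G) C)" "e \<in> set C"
     "subwalk G (Walk x es) (Circ C)" "tail G e = v" "qe G e = ch # xx" for C e xx
  proof -
    have "subwalk G (Walk x (es @ [e])) (Circ C)" using ext_right_circ[OF C(1-3,4) wx] C(5) ev by simp
    then have "lsubstr (Fin (wl G x (es @ [e]))) (Cyc (circ_label G C))" using walk_in_circ circ_cw[OF C(1)] by blast
    moreover have "wl G x (es @ [e]) = wl G x es @ ch # xx" using C(6) by (simp add: wl_app)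
    moreover have "sublist (wl G x es @ [ch]) (wl G x es @ ch # xx)" unfolding sublist_def
      by (rule exI[of _ "[]"], rule exI[of _ xx]) simp
    ultimately show ?thesis unfolding t_def using substr_trans[OF C(1)] by metis
  qed
  have tcom: "\<forall>C\<in>Labels_gpc G ` PP. \<exists>c\<in>C. lsubstr t (Cyc c)"
    unfolding labels_iff PP_def using tc[OF C1(1,3) i1 s1 e(4) q(1)] tc[OF C2(1,3) i2 s2 e(5) q(2)] by blast
  have "lsubstr (Fin (wl G x es)) t" unfolding t_def by simp
  then have "lsubstr t (Fin (wl G x es))" using oa tcom unfolding OA_def by blast
  then have "sublist (wl G x es @ [ch]) (wl G x es)" unfolding t_def by simp
  then show False using sublist_length_le by fastforce
qed

end


context ag begin

lemma in_case:
  assumes wcp: "weakly_contig_preserving G" and e: "e1 \<in> arcs G" "e2 \<in> arcs G" "e1 \<noteq> e2"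
    "head G e1 = v" "head G e2 = v" and q: "pe G e1 = y1 @ [ch]" "pe G e2 = y2 @ [ch]"
  shows False
proof -
  obtain C1 where C1: "is_circuit G C1" "hd C1 = e1" "distinct (map (tail G) C1)" "distinct (map (head G) C1)"
    using get_circ[OF e(1)] by blast
  obtain C2 where C2: "is_circuit G C2" "hd C2 = e2" "distinct (map (tail G) C2)" "distinct (map (head G) C2)"
    using get_circ[OF e(2)] by blast
  have ne1: "C1 \<noteq> []" and ne2: "C2 \<noteq> []" using C1(1) C2(1) unfolding is_circuit_def by auto
  have i1: "e1 \<in> set C1" using C1(2) ne1 by (metis list.set_sel(1))
  have i2: "e2 \<in> set C2" using C2(2) ne2 by (metis list.set_sel(1))
  have v: "v \<in> verts G" using arc_ends[OF e(1)] e(4) by simp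
  have s0: "subwalk G (Walk v []) (Circ C)" if "hd C = e" "head G e = v" "C \<noteq> []" for C e
  proof -
    have "C = [e] @ [] @ tl C" using that by (cases C) auto
    then have "rep 1 C = [e] @ [] @ tl C" by simp
    moreover have "v = walk_end G (tail G (hd C)) [e]" using that by (simp add: walk_end_def)
    ultimately show ?thesis unfolding subwalk.simps sub_ww_def
      by (intro exI[of _ 1] exI[of _ "[e]"] exI[of _ "tl C"] conjI)
  qed
  define Pd where "Pd = (\<lambda>(x, es). is_walk G x es \<and> subwalk G (Walk x es) (Circ C1) \<and> subwalk G (Walk x es) (Circ C2) \<and> x = v)"
  have P0: "Pd (v, [])" unfolding Pd_def using v s0[OF C1(2) e(4) ne1] s0[OF C2(2) e(5) ne2] by simp
  have bnd: "\<forall>y. Pd y \<longrightarrow> length (snd y) < length C1"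
  proof (intro allI impI)
    fix y assume "Pd y"
    then obtain x es where y: "y = (x, es)" "subwalk G (Walk x es) (Circ C1)" "subwalk G (Walk x es) (Circ C2)"
      unfolding Pd_def by (cases y) auto
    show "length (snd y) < length C1"
      using common_bound[OF C2(4) i1 i2 _ e(3) ne1 y(2,3)] e(4,5) y(1) by simp
  qed
  obtain W where W: "Pd W" and Wmax: "\<forall>y. Pd y \<longrightarrow> length (snd y) \<le> length (snd W)"
    using ex_has_greatest_nat[OF P0 bnd] by blast
  obtain x es where Wx: "W = (x, es)" by (cases W)
  have wx: "is_walk G x es" and s1: "subwalk G (Walk x es) (Circ C1)" and s2: "subwalk G (Walk x es) (Circ C2)"
    and xv: "x = v" using W Wx unfolding Pd_def by auto
  define PP where "PP = {{C1}, {C2}}"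
  have gpc: "\<forall>P\<in>PP. genome_path_candidate G P" unfolding PP_def using gpc_single C1(1) C2(1) by blast
  have inO: "Walk x es \<in> OGA G PP"
    unfolding OGA_def mem_Collect_eq
  proof (intro conjI allI impI)
    show "valid_wobj G (Walk x es)" using wx by simp
    show "\<forall>P\<in>PP. \<exists>c\<in>P. subwalk G (Walk x es) (Circ c)" unfolding PP_def using s1 s2 by blast
  next
    fix w' assume h: "valid_wobj G w' \<and> (\<forall>P\<in>PP. \<exists>c\<in>P. subwalk G w' (Circ c)) \<and> subwalk G (Walk x es) w'"
    then have c1: "subwalk G w' (Circ C1)" and c2: "subwalk G w' (Circ C2)" unfolding PP_def by auto
    show "subwalk G w' (Walk x es)"
    proof (cases w')
      case (Circ cs)
      show ?thesis using not_common_circ[OF i1 i2 C2(4) _ e(3)] c1 c2 Circ e(4,5) by simp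
    next
      case (Walk x' es')
      have wx': "is_walk G x' es'" using h Walk by simp
      obtain as bs where sw: "es' = as @ es @ bs" "x = walk_end G x' as" using h Walk by (auto simp: sub_ww_def)
      have as: "as = []"
      proof (rule ccontr)
        assume "as \<noteq> []"
        then obtain ar a where a: "as = ar @ [a]" by (cases as rule: rev_cases) auto
        have "is_walk G x' (ar @ [a])" using wx' sw a is_walk_app[of G x' "ar @ [a]" "es @ bs"] by simp
        have "head G a = walk_end G x' as" using a by (simp add: walk_end_def)
        then have ha: "head G a = v" using sw(2) xv by simp
        have "a \<in> set es'" using sw a by simp
        then have "a \<in> set C1" "a \<in> set C2" using sub_circ_set c1 c2 Walk by blast+
        then have "a = e1" "a = e2" using distinct_same[OF C1(4) _ i1] distinct_same[OF C2(4) _ i2] ha e(4,5) by auto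
        then show False using e(3) by simp
      qed
      have "x = x'" using sw(2) as by (simp add: walk_end_def)
      then have x'v: "x' = v" using xv by (rule subst)
      then have "Pd (x', es')" unfolding Pd_def using wx' c1 c2 Walk by simp
      then have "length es' \<le> length es" using Wmax Wx by fastforce
      then have "bs = []" using sw as by simp
      then have "es' = es" using sw as by simp
      then have "w' = Walk x es" using Walk \<open>x = x'\<close> by simp
      then show ?thesis by (simp add: sub_ww_def) (rule exI[of _ "[]"], simp add: walk_end_def)
    qed
  qed
  have "obj_label G (Walk x es) \<in> OA (Labels_gpc G ` PP)" using wcp gpc inO unfolding weakly_contig_preserving_def by blast
  moreover have "obj_label G (Walk x es) = Fin (wl G x es)" using walk_label_wl[OF wx] by simp
  ultimately have oa: "Fin (wl G x es) \<in> OA (Labels_gpc G ` PP)" by simp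
  define t where "t = Fin (ch # wl G x es)"
  have tc: "lsubstr t (Cyc (circ_label G C))" if C: "is_circuit G C" "distinct (map (head G) C)" "e \<in> set C"
     "subwalk G (Walk x es) (Circ C)" "head G e = v" "pe G e = yy @ [ch]" "e \<in> arcs G" for C e yy
  proof -
    have "subwalk G (Walk (tail G e) (e # es)) (Circ C)" using ext_left_circ[OF C(1-3,4)] C(5) xv by simp
    then have "lsubstr (Fin (wl G (tail G e) (e # es))) (Cyc (circ_label G C))" using walk_in_circ circ_cw[OF C(1)] by blast
    moreover have "wl G (tail G e) (e # es) = yy @ ch # wl G x es"
    proof -
      have we: "is_walk G (tail G e) ([e] @ es)" using C(5,7) wx xv arc_ends[OF C(7)] by simp
      have "wl G (tail G e) ([e] @ es) = pe G e @ wl G (head G e) es" using wl_split[OF we] by (simp add: walk_end_def)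
      then show ?thesis using C(5,6) xv by simp
    qed
    moreover have "sublist (ch # wl G x es) (yy @ ch # wl G x es)" unfolding sublist_def
      by (rule exI[of _ yy], rule exI[of _ "[]"]) simp
    ultimately have l1: "lsubstr (Fin (yy @ ch # wl G x es)) (Cyc (circ_label G C))"
      and sl: "sublist (ch # wl G x es) (yy @ ch # wl G x es)" by simp_all
    show ?thesis unfolding t_def by (rule substr_trans[OF C(1) l1 sl])
  qed
  have t1: "lsubstr t (Cyc (circ_label G C1))" by (rule tc[OF C1(1,4) i1 s1 e(4) q(1) e(1)])
  have t2: "lsubstr t (Cyc (circ_label G C2))" by (rule tc[OF C2(1,4) i2 s2 e(5) q(2) e(2)])
  have tcom: "\<forall>C\<in>Labels_gpc G ` PP. \<exists>c\<in>C. lsubstr t (Cyc c)"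
    unfolding labels_iff PP_def using t1 t2 by blast
  have "sublist (wl G x es) (ch # wl G x es)" unfolding sublist_def
    by (rule exI[of _ "[ch]"], rule exI[of _ "[]"]) simp
  then have "lsubstr (Fin (wl G x es)) t" unfolding t_def by simp
  then have "lsubstr t (Fin (wl G x es))" using oa tcom unfolding OA_def by blast
  then have "sublist (ch # wl G x es) (wl G x es)" unfolding t_def by simp
  then have "length (ch # wl G x es) \<le> length (wl G x es)" by (rule sublist_length_le)
  then show False by simp
qed

lemma dir1:
  assumes wcp: "weakly_contig_preserving G"
  shows "splitting G"
  unfolding splitting_def
proof (intro conjI ballI impI)
  fix v e1 e2 assume v: "v \<in> verts G" and e1: "e1 \<in> arcs G" and e2: "e2 \<in> arcs G"
    and h: "e1 \<noteq> e2 \<and> tail G e1 = v \<and> tail G e2 = v"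
  show "llcp (elab G e1) (elab G e2) = vlab G v"
  proof (rule ccontr)
    assume ne: "llcp (elab G e1) (elab G e2) \<noteq> vlab G v"
    have L1: "Le G e1 = Lv G v @ qe G e1" using arc_q[OF e1] h by simp
    have L2: "Le G e2 = Lv G v @ qe G e2" using arc_q[OF e2] h by simp
    have "longest_common_prefix (Le G e1) (Le G e2) \<noteq> Lv G v" using ne efin[OF e1] efin[OF e2] vfin[OF v] by simp
    then have "longest_common_prefix (qe G e1) (qe G e2) \<noteq> []" unfolding L1 L2 lcp_app by simp
    then obtain ch x1 x2 where "qe G e1 = ch # x1" "qe G e2 = ch # x2"
      by (cases "qe G e1"; cases "qe G e2") (auto split: if_splits)
    then show False using out_case[OF wcp e1 e2] h by blast
  qed
next
  fix u e1 e2 assume u: "u \<in> verts G" and e1: "e1 \<in> arcs G" and e2: "e2 \<in> arcs G"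
    and h: "e1 \<noteq> e2 \<and> head G e1 = u \<and> head G e2 = u"
  show "llcs (elab G e1) (elab G e2) = vlab G u"
  proof (rule ccontr)
    assume ne: "llcs (elab G e1) (elab G e2) \<noteq> vlab G u"
    have L1: "rev (Le G e1) = rev (Lv G u) @ rev (pe G e1)" using arc_p[OF e1] h by simp
    have L2: "rev (Le G e2) = rev (Lv G u) @ rev (pe G e2)" using arc_p[OF e2] h by simp
    have "rev (longest_common_prefix (rev (Le G e1)) (rev (Le G e2))) \<noteq> Lv G u" using ne efin[OF e1] efin[OF e2] vfin[OF u] by simp
    then have "longest_common_prefix (rev (pe G e1)) (rev (pe G e2)) \<noteq> []" unfolding L1 L2 lcp_app by auto
    then obtain ch z1 z2 where z: "rev (pe G e1) = ch # z1" "rev (pe G e2) = ch # z2"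
      by (cases "rev (pe G e1)"; cases "rev (pe G e2)") (auto split: if_splits)
    have "pe G e1 = rev z1 @ [ch]" using arg_cong[OF z(1), of rev] by simp
    moreover have "pe G e2 = rev z2 @ [ch]" using arg_cong[OF z(2), of rev] by simp
    ultimately show False using in_case[OF wcp e1 e2] h by blast
  qed
qed

end

theorem theorem2:
  fixes G :: "('v, 'e, 'a::finite) agraph"
  shows "(assembly_graph G \<and> weakly_contig_preserving G \<longrightarrow> splitting G) \<and>
         (assembly_graph G \<and> splitting G \<and> non_redundant G \<longrightarrow> weakly_contig_preserving G)"
proof (intro conjI impI)
  assume "assembly_graph G \<and> weakly_contig_preserving G"
  then show "splitting G" using ag.dir1 ag.intro by blast
next
  assume "assembly_graph G \<and> splitting G \<and> non_redundant G"
  then show "weakly_contig_preserving G" using ag.dir2 ag.intro by blast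
qed

end
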